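(* Let a regular network on $n$ cells with adjacency matrix $A$ be given. A subspace $S\subseteq\mathbb{C}^n$ is a synchrony subspace if and only if $S$ is a polydiagonal and $S=J_1\oplus\cdots\oplus J_m$ for some special Jordan subspaces $J_1,\dots,J_m$ to the network.
   Context: A regular network is a finite directed graph on cells $1,\dots,n$ (loops and multiple arrows allowed) in which every cell receives the same number $v$ of arrows (the valency). Its adjacency matrix $A=[a_{ij}]$ has $a_{ij}$ equal to the number of arrows cell $i$ receives from cell $j$; every row sum is $v$. $A$ acts on the total phase space $\mathbb{C}^n$ (each cell phase space taken to be $\mathbb{C}$). A polydiagonal is a subspace of $\mathbb{C}^n$ of the form $\{x : x_i=x_j \text{ for all } (i,j)\in R\}$ for some (possibly empty) set $R$ of index pairs. A synchrony subspace is a polydiagonal that is invariant under $A$ (by a theorem of Golubitsky, Stewart and Török this is equivalent to being flow-invariant for all admissible vector fields of the network). $F=\{x_1=\cdots=x_n\}$ is the fully synchrony subspace. $P(W)$ is the smallest polydiagonal containing a subspace $W$. For an eigenvalue $\lambda$ of $A$, the generalized eigenspace is $G_\lambda=\operatorname{Ker}(A-\lambda I)^p$ for $p$ large. A Jordan chain of length $k$ for $\lambda$ is a sequence of nonzero vectors $x_1,\dots,x_k$ with $(A-\lambda I)x_1=0$ and $(A-\lambda I)x_i=x_{i-1}$ for $2\le i\le k$; a Jordan subspace is the span of a Jordan chain. A Jordan subspace $W$ of a generalized eigenspace $G$ is a special Jordan subspace to the network if for every Jordan subspace $U$ of $G$ with $\dim U=\dim W$ and $P(U)\subseteq P(W)$,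 either $P(U)=P(W)$ or $U=F$. *)

theory Defs
  imports "HOL-Analysis.Analysis"
begin

text \<open>Cells are the elements of a finite type 'n. The adjacency matrix has natural-number
entries; a_ij = number of arrows cell i receives from cell j.\<close>

definition regular_network :: "nat^'n^'n \<Rightarrow> bool" where
  "regular_network A \<longleftrightarrow> (\<exists>v. \<forall>i. (\<Sum>j\<in>UNIV. A $ i $ j) = v)"

definition cmat :: "nat^'n^'n \<Rightarrow> complex^'n^'n" where
  "cmat A = (\<chi> i j. of_nat (A $ i $ j))"

definition polydiagonal :: "(complex^'n) set \<Rightarrow> bool" where
  "polydiagonal S \<longleftrightarrow> (\<exists>R :: ('n \<times> 'n) set. S = {x. \<forall>(i,j)\<in>R. x $ i = x $ j})"

definition synchrony_subspace :: "nat^'n^'n \<Rightarrow> (complex^'n) set \<Rightarrow> bool" where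
  "synchrony_subspace A S \<longleftrightarrow> polydiagonal S \<and> (\<forall>x\<in>S. cmat A *v x \<in> S)"

definition full_sync :: "(complex^'n) set" where
  "full_sync = {x. \<forall>i j. x $ i = x $ j}"

definition polyclosure :: "(complex^'n) set \<Rightarrow> (complex^'n) set" where
  "polyclosure W = \<Inter> {S. polydiagonal S \<and> W \<subseteq> S}"

definition jordan_chain :: "nat^'n^'n \<Rightarrow> complex \<Rightarrow> nat \<Rightarrow> (nat \<Rightarrow> complex^'n) \<Rightarrow> bool" where
  "jordan_chain A lam k x \<longleftrightarrow> k \<ge> 1 \<and> (\<forall>i<k. x i \<noteq> 0)
     \<and> cmat A *v x 0 - lam *s x 0 = 0
     \<and> (\<forall>i. 1 \<le> i \<and> i < k \<longrightarrow> cmat A *v x i - lam *s x i = x (i - 1))"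

definition jordan_subspace :: "nat^'n^'n \<Rightarrow> complex \<Rightarrow> (complex^'n) set \<Rightarrow> bool" where
  "jordan_subspace A lam W \<longleftrightarrow> (\<exists>k x. jordan_chain A lam k x \<and> W = vec.span (x ` {..<k}))"

definition special_jordan_subspace :: "nat^'n^'n \<Rightarrow> (complex^'n) set \<Rightarrow> bool" where
  "special_jordan_subspace A W \<longleftrightarrow> (\<exists>lam. jordan_subspace A lam W \<and>
     (\<forall>U. jordan_subspace A lam U \<and> vec.dim U = vec.dim W \<and> polyclosure U \<subseteq> polyclosure W
          \<longrightarrow> polyclosure U = polyclosure W \<or> U = full_sync))"

definition is_direct_sum :: "(complex^'n) set \<Rightarrow> nat \<Rightarrow> (nat \<Rightarrow> (complex^'n) set) \<Rightarrow> bool" where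
  "is_direct_sum S m J \<longleftrightarrow>
     S = {(\<Sum>k<m. y k) | y. \<forall>k<m. y k \<in> J k} \<and>
     (\<forall>y. (\<forall>k<m. y k \<in> J k) \<and> (\<Sum>k<m. y k) = 0 \<longrightarrow> (\<forall>k<m. y k = 0))"

end

theory Submission
  imports Defs "HOL-Computational_Algebra.Fundamental_Theorem_Algebra"
begin

definition Tm :: "nat^'n^'n \<Rightarrow> complex \<Rightarrow> complex^'n \<Rightarrow> complex^'n" where
  "Tm A lam z = cmat A *v z - lam *s z"

lemma Tm_add: "Tm A lam (a + b) = Tm A lam a + Tm A lam b"
  by (simp add: Tm_def matrix_vector_right_distrib vector_ssub_ldistrib algebra_simps)

lemma Tm_scale: "Tm A lam (c *s a) = c *s Tm A lam a"
  by (simp add: Tm_def vector_scalar_commute vector_ssub_ldistrib algebra_simps)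

lemma Tm_zero[simp]: "Tm A lam 0 = 0"
  by (simp add: Tm_def)

lemma Tm_diff: "Tm A lam (a - b) = Tm A lam a - Tm A lam b"
  by (simp add: Tm_def matrix_vector_mult_diff_distrib vector_ssub_ldistrib algebra_simps)

lemma Tm_sum: "Tm A lam (\<Sum>i\<in>I. f i) = (\<Sum>i\<in>I. Tm A lam (f i))"
  by (induction I rule: infinite_finite_induct) (auto simp: Tm_add)

lemma Tm_shift: "Tm A mu z = Tm A lam z + (lam - mu) *s z"
  by (simp add: Tm_def algebra_simps)

definition vecs :: "nat \<Rightarrow> (nat \<Rightarrow> nat) \<Rightarrow> (nat \<Rightarrow> nat \<Rightarrow> complex^'n) \<Rightarrow> (complex^'n) set" where
  "vecs m k x = {x i t | i t. i < m \<and> t < k i}"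

definition indep :: "nat \<Rightarrow> (nat \<Rightarrow> nat) \<Rightarrow> (nat \<Rightarrow> nat \<Rightarrow> complex^'n) \<Rightarrow> bool" where
  "indep m k x \<longleftrightarrow> (\<forall>c. (\<Sum>i<m. \<Sum>t<k i. c i t *s x i t) = 0 \<longrightarrow> (\<forall>i<m. \<forall>t<k i. c i t = 0))"

lemma if_scale: "(if P then a else 0) *s v = (if P then a *s (v::complex^'n) else 0)"
  by simp

lemma sum_delta2:
  fixes x :: "nat \<Rightarrow> nat \<Rightarrow> complex^'n"
  assumes "i < m" "t < k i"
  shows "(\<Sum>i'<m. \<Sum>t'<k i'. (if i' = i \<and> t' = t then a else 0) *s x i' t') = a *s x i t"
proof -
  have "(\<Sum>i'<m. \<Sum>t'<k i'. (if i' = i \<and> t' = t then a else 0) *s x i' t')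
      = (\<Sum>i'<m. if i' = i then a *s x i t else 0)"
    by (rule sum.cong) (auto simp: if_scale sum.delta assms)
  also have "\<dots> = a *s x i t" using assms by (simp add: sum.delta)
  finally show ?thesis .
qed

lemma subspace_rep: "vec.subspace {(\<Sum>i<m. \<Sum>t<k i. c i t *s x i t) | c. True}"
  unfolding vec.subspace_def
proof (intro conjI allI impI ballI)
  show "0 \<in> {(\<Sum>i<m. \<Sum>t<k i. c i t *s x i t) | c. True}"
    by (rule CollectI, rule exI[of _ "\<lambda>_ _. 0"]) simp
next
  fix a y assume "y \<in> {(\<Sum>i<m. \<Sum>t<k i. c i t *s x i t) | c. True}"
  then obtain c where "y = (\<Sum>i<m. \<Sum>t<k i. c i t *s x i t)" by auto
  then show "a *s y \<in> {(\<Sum>i<m. \<Sum>t<k i. c i t *s x i t) | c. True}"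
    by (intro CollectI exI[of _ "\<lambda>i t. a * c i t"])
       (simp add: vec.scale_sum_right vector_smult_assoc)
next
  fix y z assume "y \<in> {(\<Sum>i<m. \<Sum>t<k i. c i t *s x i t) | c. True}"
    "z \<in> {(\<Sum>i<m. \<Sum>t<k i. c i t *s x i t) | c. True}"
  then obtain c d where "y = (\<Sum>i<m. \<Sum>t<k i. c i t *s x i t)"
    "z = (\<Sum>i<m. \<Sum>t<k i. d i t *s x i t)" by auto
  then show "y + z \<in> {(\<Sum>i<m. \<Sum>t<k i. c i t *s x i t) | c. True}"
    by (intro CollectI exI[of _ "\<lambda>i t. c i t + d i t"])
       (simp add: sum.distrib vector_sadd_rdistrib)
qed

lemma span_vecs_rep:
  fixes x :: "nat \<Rightarrow> nat \<Rightarrow> complex^'n"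
  shows "vec.span (vecs m k x) = {(\<Sum>i<m. \<Sum>t<k i. c i t *s x i t) | c. True}"
proof
  show "vec.span (vecs m k x) \<subseteq> {(\<Sum>i<m. \<Sum>t<k i. c i t *s x i t) | c. True}"
  proof (rule vec.span_minimal[OF _ subspace_rep], rule subsetI)
    fix y assume "y \<in> vecs m k x"
    then obtain i t where it: "i < m" "t < k i" "y = x i t" by (auto simp: vecs_def)
    show "y \<in> {(\<Sum>i<m. \<Sum>t<k i. c i t *s x i t) | c. True}"
      by (rule CollectI, rule exI[of _ "\<lambda>i' t'. if i' = i \<and> t' = t then 1 else 0"])
         (simp add: sum_delta2 it)
  qed
next
  show "{(\<Sum>i<m. \<Sum>t<k i. c i t *s x i t) | c. True} \<subseteq> vec.span (vecs m k x)"
  proof (rule subsetI)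
    fix y assume "y \<in> {(\<Sum>i<m. \<Sum>t<k i. c i t *s x i t) | c. True}"
    then obtain c where y: "y = (\<Sum>i<m. \<Sum>t<k i. c i t *s x i t)" by auto
    have "x i t \<in> vecs m k x" if "i < m" "t < k i" for i t
      using that unfolding vecs_def by blast
    then show "y \<in> vec.span (vecs m k x)"
      unfolding y by (intro vec.span_sum vec.span_scale vec.span_base) auto
  qed
qed


definition Ix :: "nat \<Rightarrow> (nat \<Rightarrow> nat) \<Rightarrow> (nat \<times> nat) set" where
  "Ix m k = Sigma {..<m} (\<lambda>i. {..<k i})"

lemma finite_Ix[simp]: "finite (Ix m k)"
  by (simp add: Ix_def)

lemma card_Ix: "card (Ix m k) = (\<Sum>i<m. k i)"
  by (simp add: Ix_def card_SigmaI)

lemma vecs_Ix: "vecs m k x = (\<lambda>(i,t). x i t) ` Ix m k"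
  by (auto simp: vecs_def Ix_def)

lemma sum_Ix: "(\<Sum>i<m. \<Sum>t<k i. h i t) = (\<Sum>p\<in>Ix m k. h (fst p) (snd p))"
  unfolding Ix_def by (subst sum.Sigma) (auto simp: case_prod_beta)

lemma dep_lemma:
  fixes f :: "'i \<Rightarrow> complex^'n"
  assumes "finite I" "card I > vec.dim (f ` I)"
  shows "\<exists>c. (\<Sum>i\<in>I. c i *s f i) = 0 \<and> (\<exists>i\<in>I. c i \<noteq> 0)"
proof (cases "inj_on f I")
  case False
  then obtain i j where ij: "i \<in> I" "j \<in> I" "i \<noteq> j" "f i = f j"
    unfolding inj_on_def by blast
  define c where "c = (\<lambda>l. if l = i then (1::complex) else if l = j then -1 else 0)"
  have "(\<Sum>l\<in>I. c l *s f l) = (\<Sum>l\<in>I. (if l = i then f i else 0)) - (\<Sum>l\<in>I. (if l = j then f j else 0))"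
    unfolding sum_subtractf[symmetric]
  proof (rule sum.cong)
    fix l assume "l \<in> I"
    show "c l *s f l = (if l = i then f i else 0) - (if l = j then f j else 0)"
      using ij(3) by (cases "l = i"; cases "l = j") (simp_all add: c_def vector_smult_lneg)
  qed simp
  also have "\<dots> = 0" using ij assms(1) by (simp only: sum.delta) simp
  finally show ?thesis using ij by (intro exI[of _ c]) (auto simp: c_def)
next
  case True
  have "card (f ` I) = card I" using True by (simp add: card_image)
  have "\<not> vec.independent (f ` I)"
  proof
    assume "vec.independent (f ` I)"
    then have "vec.dim (f ` I) = card (f ` I)" by (rule vec.dim_eq_card_independent)
    with assms \<open>card (f ` I) = card I\<close> show False by simp
  qed
  then obtain u where u: "\<exists>v\<in>f ` I. u v \<noteq> 0" "(\<Sum>v\<in>f ` I. u v *s v) = 0"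
    using vec.dependent_finite[of "f ` I"] assms(1) by auto
  have "(\<Sum>i\<in>I. u (f i) *s f i) = 0"
    using u(2) by (simp add: sum.reindex[OF True])
  then show ?thesis using u(1) by (intro exI[of _ "u \<circ> f"]) auto
qed

lemma indep_explicit:
  fixes g :: "'i \<Rightarrow> complex^'n"
  assumes "finite I" "inj_on g I" "vec.independent (g ` I)" "(\<Sum>p\<in>I. c p *s g p) = 0" "p \<in> I"
  shows "c p = 0"
proof -
  define u where "u = (\<lambda>v. c (the_inv_into I g v))"
  have "(\<Sum>v\<in>g ` I. u v *s v) = (\<Sum>p\<in>I. u (g p) *s g p)"
    by (simp add: sum.reindex[OF assms(2)])
  also have "\<dots> = (\<Sum>p\<in>I. c p *s g p)"
    by (rule sum.cong) (auto simp: u_def the_inv_into_f_f[OF assms(2)])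
  finally have "(\<Sum>v\<in>g ` I. u v *s v) = 0" using assms(4) by simp
  then have "\<forall>v\<in>g ` I. u v = 0"
    using vec.dependent_finite[of "g ` I"] assms(1,3) by auto
  then show ?thesis using assms(5) by (auto simp: u_def the_inv_into_f_f[OF assms(2)])
qed

lemma indep_by_count:
  fixes x :: "nat \<Rightarrow> nat \<Rightarrow> complex^'n"
  assumes "vecs m k x \<subseteq> V" "V \<subseteq> vec.span (vecs m k x)" "(\<Sum>i<m. k i) \<le> vec.dim V"
  shows "indep m k x"
  unfolding indep_def
proof (intro allI impI)
  fix c i t assume rel: "(\<Sum>i<m. \<Sum>t<k i. c i t *s x i t) = 0" and it: "i < m" "t < k i"
  define g where "g = (\<lambda>(i,t). x i t)"
  have vI: "vecs m k x = g ` Ix m k" by (simp add: vecs_Ix g_def)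
  have d1: "vec.dim V \<le> card (g ` Ix m k)"
    using vec.dim_le_card[of V "g ` Ix m k"] assms(2) vI by simp
  have d2: "card (g ` Ix m k) \<le> card (Ix m k)" by (rule card_image_le) simp
  have cI: "card (Ix m k) \<le> vec.dim V" using assms(3) card_Ix by simp
  have inj: "inj_on g (Ix m k)"
    using d1 d2 cI by (intro eq_card_imp_inj_on) auto
  have ind: "vec.independent (g ` Ix m k)"
    using vec.card_le_dim_spanning[of "g ` Ix m k" V] assms(1,2) vI d1 d2 cI by auto
  have "(\<Sum>p\<in>Ix m k. c (fst p) (snd p) *s g p) = 0"
    using rel by (simp add: sum_Ix g_def case_prod_beta)
  from indep_explicit[OF finite_Ix inj ind this, of "(i,t)"] it
  show "c i t = 0" by (simp add: Ix_def)
qed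

lemma dim_indep:
  fixes x :: "nat \<Rightarrow> nat \<Rightarrow> complex^'n"
  assumes "indep m k x"
  shows "vec.dim (vecs m k x) = (\<Sum>i<m. k i)"
proof -
  define g where "g = (\<lambda>(i,t). x i t)"
  have vI: "vecs m k x = g ` Ix m k" by (simp add: vecs_Ix g_def)
  have le: "vec.dim (vecs m k x) \<le> (\<Sum>i<m. k i)"
    using vec.dim_le_card[of "vecs m k x" "g ` Ix m k"] card_image_le[of "Ix m k" g] vI card_Ix
    by (simp add: vec.span_superset)
  show ?thesis
  proof (rule ccontr)
    assume "vec.dim (vecs m k x) \<noteq> (\<Sum>i<m. k i)"
    with le have "card (Ix m k) > vec.dim (g ` Ix m k)" using vI card_Ix by simp
    from dep_lemma[OF finite_Ix this] obtain c p where
      c: "(\<Sum>p\<in>Ix m k. c p *s g p) = 0" "p \<in> Ix m k" "c p \<noteq> 0" by blast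
    have "(\<Sum>i<m. \<Sum>t<k i. c (i,t) *s x i t) = 0"
      using c(1) by (simp add: sum_Ix g_def case_prod_beta)
    with assms c(2,3) show False unfolding indep_def Ix_def by auto
  qed
qed


lemma jc_k: "jordan_chain A lam k x \<Longrightarrow> k \<ge> 1"
  by (simp add: jordan_chain_def)
lemma jc_nz: "jordan_chain A lam k x \<Longrightarrow> t < k \<Longrightarrow> x t \<noteq> 0"
  by (simp add: jordan_chain_def)
lemma jc_0: "jordan_chain A lam k x \<Longrightarrow> Tm A lam (x 0) = 0"
  by (simp add: jordan_chain_def Tm_def)
lemma jc_S: "jordan_chain A lam k x \<Longrightarrow> Suc t < k \<Longrightarrow> Tm A lam (x (Suc t)) = x t"
proof -
  assume a: "jordan_chain A lam k x" "Suc t < k"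
  then have "\<forall>i. 1 \<le> i \<and> i < k \<longrightarrow> cmat A *v x i - lam *s x i = x (i - 1)"
    unfolding jordan_chain_def by blast
  then have "cmat A *v x (Suc t) - lam *s x (Suc t) = x (Suc t - 1)" using a(2) by simp
  then show ?thesis by (simp add: Tm_def)
qed

lemma jc_Tm: "jordan_chain A lam k x \<Longrightarrow> t < k \<Longrightarrow> Tm A lam (x t) = (if t = 0 then 0 else x (t - 1))"
proof -
  assume a: "jordan_chain A lam k x" "t < k"
  show ?thesis
  proof (cases t)
    case 0 then show ?thesis using jc_0[OF a(1)] by simp
  next
    case (Suc s) then show ?thesis using jc_S[OF a(1), of s] a(2) by simp
  qed
qed

lemma jc_shorter: "jordan_chain A lam (Suc k) x \<Longrightarrow> k \<ge> 1 \<Longrightarrow> jordan_chain A lam k x"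
  unfolding jordan_chain_def by (metis less_Suc_eq)

lemma chain_indep:
  assumes "jordan_chain A lam k x" "(\<Sum>t<k. c t *s x t) = 0" "t < k"
  shows "c t = 0"
  using assms
proof (induction k arbitrary: c t)
  case 0 then show ?case by simp
next
  case (Suc k)
  show ?case
  proof (cases "k = 0")
    case True
    have "c 0 *s x 0 = 0" using Suc.prems(2) True by simp
    then have "c 0 = 0" using jc_nz[OF Suc.prems(1), of 0] by simp
    then show ?thesis using Suc.prems(3) True by simp
  next
    case False
    have ch: "jordan_chain A lam k x" using jc_shorter[OF Suc.prems(1)] False by simp
    have "Tm A lam (\<Sum>t<Suc k. c t *s x t) = 0" by (simp only: Suc.prems(2) Tm_zero)
    then have "(\<Sum>t<Suc k. c t *s Tm A lam (x t)) = 0" by (simp only: Tm_sum Tm_scale)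
    then have "c 0 *s Tm A lam (x 0) + (\<Sum>t<k. c (Suc t) *s Tm A lam (x (Suc t))) = 0"
      by (simp del: sum.lessThan_Suc add: sum.lessThan_Suc_shift)
    moreover have "(\<Sum>t<k. c (Suc t) *s Tm A lam (x (Suc t))) = (\<Sum>t<k. c (Suc t) *s x t)"
      by (rule sum.cong) (auto simp: jc_S[OF Suc.prems(1)])
    ultimately have "(\<Sum>t<k. c (Suc t) *s x t) = 0"
      using jc_0[OF Suc.prems(1)] by simp
    then have cS: "\<forall>t<k. c (Suc t) = 0" using Suc.IH[OF ch, of "\<lambda>t. c (Suc t)"] by blast
    then have "(\<Sum>t<k. c (Suc t) *s x (Suc t)) = 0" by simp
    then have "c 0 *s x 0 = 0" using Suc.prems(2) by (simp del: sum.lessThan_Suc add: sum.lessThan_Suc_shift)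
    then have c0: "c 0 = 0" using jc_nz[OF Suc.prems(1), of 0] by simp
    show ?thesis using Suc.prems(3) cS c0 by (cases t) auto
  qed
qed

lemma vecs_single: "vecs (Suc 0) (\<lambda>_. k) (\<lambda>_. x) = x ` {..<k}"
  by (auto simp: vecs_def)

lemma chain_indep1: "jordan_chain A lam k x \<Longrightarrow> indep (Suc 0) (\<lambda>_. k) (\<lambda>_. x)"
  unfolding indep_def using chain_indep by auto

lemma dim_chain:
  assumes "jordan_chain A lam k x"
  shows "vec.dim (vec.span (x ` {..<k})) = k"
proof -
  have "vec.dim (vecs (Suc 0) (\<lambda>_. k) (\<lambda>_. x)) = (\<Sum>i<Suc 0. k)"
    by (rule dim_indep[OF chain_indep1[OF assms]])
  then show ?thesis by (simp add: vecs_single vec.dim_span)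
qed

lemma subspace_Tm_pre: "vec.subspace {z. Tm A r z \<in> vec.span H}"
  unfolding vec.subspace_def
  by (auto simp: Tm_add Tm_scale intro: vec.span_add vec.span_scale vec.span_zero)

lemma Tm_span:
  assumes "\<And>g. g \<in> G \<Longrightarrow> Tm A r g \<in> vec.span H" "z \<in> vec.span G"
  shows "Tm A r z \<in> vec.span H"
  using vec.span_induct[OF assms(2) subspace_Tm_pre[of A r H]] assms(1) by blast

lemma chain_Tm_in:
  assumes "jordan_chain A lam k x" "t < k"
  shows "Tm A r (x t) \<in> vec.span (x ` {..<k})"
proof -
  have "Tm A r (x t) = Tm A lam (x t) + (lam - r) *s x t" by (rule Tm_shift)
  moreover have "Tm A lam (x t) \<in> vec.span (x ` {..<k})"
    using jc_Tm[OF assms] assms(2) by (auto intro: vec.span_base vec.span_zero)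
  moreover have "x t \<in> vec.span (x ` {..<k})" using assms(2) by (auto intro: vec.span_base)
  ultimately show ?thesis by (metis vec.span_add vec.span_scale)
qed

lemma chain_span_inv:
  assumes "jordan_chain A lam k x" "z \<in> vec.span (x ` {..<k})"
  shows "Tm A r z \<in> vec.span (x ` {..<k})"
  using Tm_span[OF _ assms(2)] chain_Tm_in[OF assms(1)] by blast

lemma M_eq_Tm: "cmat A *v z = Tm A 0 z"
  by (simp add: Tm_def)


lemma pc_eq: "polyclosure W = {z. \<forall>a b. (\<forall>w\<in>W. w$a = w$b) \<longrightarrow> z$a = z$b}"
proof -
  define R where "R = {(a,b). \<forall>w\<in>W. w$a = w$b}"
  define D where "D = {z::complex^'a. \<forall>(a,b)\<in>R. z$a = z$b}"
  have D: "polydiagonal D" unfolding polydiagonal_def D_def by blast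
  have WD: "W \<subseteq> D" unfolding D_def R_def by auto
  have "polyclosure W \<subseteq> D" unfolding polyclosure_def using D WD by blast
  moreover have "D \<subseteq> polyclosure W"
  proof (unfold polyclosure_def, rule Inter_greatest)
    fix S assume "S \<in> {S. polydiagonal S \<and> W \<subseteq> S}"
    then obtain R' where S: "S = {x. \<forall>(i,j)\<in>R'. x $ i = x $ j}" "W \<subseteq> S"
      unfolding polydiagonal_def by blast
    have "R' \<subseteq> R" using S unfolding R_def by auto
    then show "D \<subseteq> S" unfolding D_def S(1) by auto
  qed
  ultimately show ?thesis unfolding D_def R_def by auto
qed

lemma pc_char: "z \<in> polyclosure W \<longleftrightarrow> (\<forall>a b. (\<forall>w\<in>W. w$a = w$b) \<longrightarrow> z$a = z$b)"
  by (simp add: pc_eq)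

lemma sub_pc: "W \<subseteq> polyclosure W"
  by (auto simp: pc_char)

lemma pc_min: "polydiagonal S \<Longrightarrow> W \<subseteq> S \<Longrightarrow> polyclosure W \<subseteq> S"
  unfolding polyclosure_def by blast

lemma polyd_subspace: "polydiagonal S \<Longrightarrow> vec.subspace S"
  unfolding polydiagonal_def vec.subspace_def by fastforce

lemma pc_polyd: "polydiagonal (polyclosure W)"
  unfolding pc_eq polydiagonal_def
  by (rule exI[of _ "{(a,b). \<forall>w\<in>W. w$a = w$b}"]) auto

lemma pc_subspace: "vec.subspace (polyclosure W)"
  by (rule polyd_subspace[OF pc_polyd])

lemma polyd_span: "polydiagonal S \<Longrightarrow> vec.span S = S"
  by (simp add: polyd_subspace vec.span_eq_iff)

lemma Re_ofnat_mult: "Re (of_nat n * y) = real n * Re y"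
  by simp

lemma semisimple:
  fixes A :: "nat^'n^'n"
  assumes reg: "regular_network A" and
    e1: "Tm A lam u1 = u0" and f: "u0 \<in> full_sync" and nz: "u0 \<noteq> 0" and e0: "Tm A lam u0 = 0"
  shows False
proof -
  obtain v where v: "\<And>i. (\<Sum>j\<in>UNIV. A $ i $ j) = v" using reg unfolding regular_network_def by blast
  obtain i1 :: 'n where True by blast
  define a where "a = u0 $ i1"
  have u0c: "\<And>j. u0 $ j = a" using f unfolding full_sync_def a_def by auto
  have a0: "a \<noteq> 0"
  proof
    assume "a = 0"
    then have "u0 = 0" using u0c by (simp add: vec_eq_iff)
    with nz show False by simp
  qed
  have rowsum: "\<And>i. (\<Sum>j\<in>UNIV. of_nat (A $ i $ j) :: complex) = of_nat v"
    using v by (metis of_nat_sum)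
  have "(Tm A lam u0) $ i1 = 0" using e0 by simp
  then have "(\<Sum>j\<in>UNIV. of_nat (A $ i1 $ j) * a) - lam * a = 0"
    by (simp add: Tm_def cmat_def matrix_vector_mult_def u0c)
  then have "of_nat v * a - lam * a = 0"
    by (simp add: sum_distrib_right[symmetric] rowsum)
  then have lamv: "lam = of_nat v" using a0 by (simp add: algebra_simps)
  define w where "w = (\<lambda>j. Re (u1 $ j / a))"
  have fin: "finite (range w)" by simp
  have "Max (range w) \<in> range w" using Max_in[OF fin] by simp
  then obtain i0 where i0: "w i0 = Max (range w)" by (metis rangeE)
  have wle: "\<And>j. w j \<le> w i0" using i0 Max_ge[OF fin] by simp
  have "(Tm A lam u1) $ i0 = a" using e1 u0c by simp
  then have "(\<Sum>j\<in>UNIV. of_nat (A $ i0 $ j) * u1 $ j) - lam * u1 $ i0 = a"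
    by (simp add: Tm_def cmat_def matrix_vector_mult_def)
  then have "((\<Sum>j\<in>UNIV. of_nat (A $ i0 $ j) * u1 $ j) - lam * u1 $ i0) / a = 1"
    using a0 by simp
  then have "(\<Sum>j\<in>UNIV. of_nat (A $ i0 $ j) * (u1 $ j / a)) - of_nat v * (u1 $ i0 / a) = 1"
    by (simp add: diff_divide_distrib sum_divide_distrib lamv)
  then have "Re ((\<Sum>j\<in>UNIV. of_nat (A $ i0 $ j) * (u1 $ j / a)) - of_nat v * (u1 $ i0 / a)) = 1"
    by simp
  then have eq: "(\<Sum>j\<in>UNIV. real (A $ i0 $ j) * w j) - real v * w i0 = 1"
    unfolding w_def minus_complex.sel Re_sum Re_ofnat_mult .
  have "(\<Sum>j\<in>UNIV. real (A $ i0 $ j) * w j) \<le> (\<Sum>j\<in>UNIV. real (A $ i0 $ j) * w i0)"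
    by (rule sum_mono) (simp add: wle mult_left_mono)
  also have "\<dots> = real v * w i0"
    using v[of i0] by (simp add: sum_distrib_right[symmetric] of_nat_sum[symmetric])
  finally show False using eq by simp
qed

lemma full_sync_span:
  fixes u :: "complex^'n"
  assumes "u \<in> full_sync" "u \<noteq> 0"
  shows "vec.span {u} = full_sync"
proof -
  obtain i1 :: 'n where True by blast
  define a where "a = u $ i1"
  have uc: "\<And>j. u $ j = a" using assms(1) unfolding full_sync_def a_def by auto
  have a0: "a \<noteq> 0" using assms(2) uc by (auto simp: vec_eq_iff)
  show ?thesis
  proof
    show "vec.span {u} \<subseteq> full_sync"
      by (auto simp: vec.span_singleton full_sync_def uc)
  next
    show "full_sync \<subseteq> vec.span {u}"
    proof
      fix z :: "complex^'n" assume z: "z \<in> full_sync"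
      have "z = (z $ i1 / a) *s u"
        using z a0 uc unfolding full_sync_def by (auto simp: vec_eq_iff)
      then show "z \<in> vec.span {u}" by (auto simp: vec.span_singleton)
    qed
  qed
qed


definition Mp :: "nat^'n^'n \<Rightarrow> nat \<Rightarrow> complex^'n \<Rightarrow> complex^'n" where
  "Mp A j z = (((*v) (cmat A)) ^^ j) z"

definition opoly :: "nat^'n^'n \<Rightarrow> complex poly \<Rightarrow> complex^'n \<Rightarrow> complex^'n" where
  "opoly A p z = (\<Sum>j<Suc (degree p). coeff p j *s Mp A j z)"

lemma Mp_Suc: "Mp A (Suc j) z = cmat A *v Mp A j z"
  by (simp add: Mp_def)

lemma mv_sum: "(M::complex^'n^'m) *v (\<Sum>i\<in>I. f i) = (\<Sum>i\<in>I. M *v f i)"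
  by (induction I rule: infinite_finite_induct) (auto simp: matrix_vector_right_distrib)

lemma opoly_bound:
  assumes "degree p < n"
  shows "opoly A p z = (\<Sum>j<n. coeff p j *s Mp A j z)"
  unfolding opoly_def
  by (rule sum.mono_neutral_right[symmetric]) (use assms in \<open>auto simp: coeff_eq_0\<close>)

lemma opoly_0[simp]: "opoly A 0 z = 0"
  by (simp add: opoly_def)

lemma opoly_pCons: "opoly A (pCons a p) z = a *s z + cmat A *v opoly A p z"
proof -
  have d: "degree (pCons a p) < Suc (Suc (degree p))"
    using degree_pCons_le[of a p] by simp
  have "opoly A (pCons a p) z = (\<Sum>j<Suc (Suc (degree p)). coeff (pCons a p) j *s Mp A j z)"
    by (rule opoly_bound[OF d])
  also have "\<dots> = a *s z + (\<Sum>j<Suc (degree p). coeff p j *s Mp A (Suc j) z)"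
    by (simp del: sum.lessThan_Suc add: sum.lessThan_Suc_shift Mp_def)
  also have "\<dots> = a *s z + cmat A *v opoly A p z"
    by (simp del: sum.lessThan_Suc add: opoly_def mv_sum Mp_Suc vector_scalar_commute)
  finally show ?thesis .
qed

lemma opoly_smult: "opoly A (smult c p) z = c *s opoly A p z"
proof -
  have d: "degree (smult c p) < Suc (degree p)" using degree_smult_le[of c p] by simp
  show ?thesis
    by (simp add: opoly_bound[OF d] opoly_def vec.scale_sum_right vector_smult_assoc)
qed

lemma opoly_add: "opoly A (p + q) z = opoly A p z + opoly A q z"
proof -
  define n where "n = Suc (max (degree p) (degree q))"
  have d1: "degree (p + q) < n" using degree_add_le_max[of p q] n_def by simp
  have d2: "degree p < n" "degree q < n" using n_def by auto
  show ?thesis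
    by (simp add: opoly_bound[OF d1] opoly_bound[OF d2(1)] opoly_bound[OF d2(2)]
        vector_sadd_rdistrib sum.distrib)
qed

lemma opoly_mult: "opoly A (p * q) z = opoly A p (opoly A q z)"
proof (induction p)
  case 0 then show ?case by simp
next
  case (pCons a p)
  have "opoly A (pCons a p * q) z = opoly A (smult a q + pCons 0 (p * q)) z"
    by (simp add: mult_pCons_left)
  also have "\<dots> = a *s opoly A q z + cmat A *v opoly A p (opoly A q z)"
    by (simp add: opoly_add opoly_smult opoly_pCons pCons.IH)
  also have "\<dots> = opoly A (pCons a p) (opoly A q z)"
    by (simp add: opoly_pCons)
  finally show ?case .
qed

lemma opoly_lin: "opoly A [:-r, 1:] z = Tm A r z"
  by (simp add: opoly_pCons Tm_def vector_smult_lneg)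

lemma opoly_const: "opoly A [:c:] z = c *s z"
  by (simp add: opoly_pCons)

lemma Mp_in:
  assumes "vec.subspace V" "\<And>z. z \<in> V \<Longrightarrow> cmat A *v z \<in> V" "z \<in> V"
  shows "Mp A j z \<in> V"
  by (induction j) (auto simp: Mp_def assms)

lemma annihilator:
  assumes "vec.subspace V" "\<And>z. z \<in> V \<Longrightarrow> cmat A *v z \<in> V" "z0 \<in> V"
  shows "\<exists>p. p \<noteq> 0 \<and> opoly A p z0 = 0"
proof -
  define N where "N = vec.dim V"
  define f where "f = (\<lambda>j. Mp A j z0)"
  have fV: "f ` {..<Suc N} \<subseteq> V" unfolding f_def using Mp_in[OF assms] by blast
  have "vec.dim (f ` {..<Suc N}) \<le> vec.dim V"
    by (rule vec.dim_mono, rule order.trans[OF fV vec.span_superset])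
  then have "vec.dim (f ` {..<Suc N}) \<le> N" unfolding N_def .
  moreover have "card {..<Suc N} = Suc N" by (rule card_lessThan)
  ultimately have "card {..<Suc N} > vec.dim (f ` {..<Suc N})" by linarith
  from dep_lemma[OF finite_lessThan this] obtain c j0 where
    c: "(\<Sum>i\<in>{..<Suc N}. c i *s f i) = 0" "j0 \<in> {..<Suc N}" "c j0 \<noteq> 0" by blast
  define j where "j = j0"
  have cj: "j < Suc N" "c j \<noteq> 0" using c(2,3) by (auto simp: j_def)
  define p where "p = (\<Sum>i<Suc N. monom (c i) i)"
  have cp: "coeff p i = (if i < Suc N then c i else 0)" for i
    unfolding p_def coeff_sum coeff_monom by (simp del: sum.lessThan_Suc add: sum.delta)
  have dp: "degree p < Suc N"
  proof -
    have "degree p \<le> N" by (rule degree_le) (auto simp: cp)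
    then show ?thesis by simp
  qed
  have "opoly A p z0 = (\<Sum>i<Suc N. coeff p i *s Mp A i z0)" by (rule opoly_bound[OF dp])
  also have "\<dots> = (\<Sum>i<Suc N. c i *s f i)" by (rule sum.cong) (simp_all del: sum.lessThan_Suc add: cp f_def)
  finally have "opoly A p z0 = 0" using c(1) by simp
  moreover have "p \<noteq> 0" using cp[of j] cj by auto
  ultimately show ?thesis by blast
qed

lemma root_step:
  assumes V: "vec.subspace V" "\<And>z. z \<in> V \<Longrightarrow> cmat A *v z \<in> V" and W: "vec.subspace W"
  shows "p \<noteq> 0 \<Longrightarrow> z \<in> V \<Longrightarrow> z \<notin> W \<Longrightarrow> opoly A p z \<in> W \<Longrightarrow> \<exists>z' r. z' \<in> V \<and> z' \<notin> W \<and> Tm A r z' \<in> W"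
proof (induction "degree p" arbitrary: p z rule: less_induct)
  case less
  show ?case
  proof (cases "degree p = 0")
    case True
    then obtain c where pc: "p = [:c:]" by (metis degree_eq_zeroE)
    then have c0: "c \<noteq> 0" using less.prems(1) by simp
    have "c *s z \<in> W" using less.prems(4) pc opoly_const by metis
    then have "(1/c) *s (c *s z) \<in> W" using W by (rule vec.subspace_scale[rotated])
    moreover have "(1/c) *s (c *s z) = z" using c0 by (simp add: vector_smult_assoc)
    ultimately have "z \<in> W" by simp
    with less.prems(3) show ?thesis by simp
  next
    case False
    then have "\<not> constant (poly p)" by (simp add: constant_degree)
    then obtain r where "poly p r = 0" using fundamental_theorem_of_algebra by blast
    then have "[:-r, 1:] dvd p" by (simp add: poly_eq_0_iff_dvd)
    then obtain q where pq: "p = [:-r, 1:] * q" by (rule dvdE)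
    have q0: "q \<noteq> 0" using pq less.prems(1) by auto
    have "degree p = degree [:-r, 1:] + degree q" unfolding pq by (rule degree_mult_eq) (use q0 in auto)
    then have dq: "degree q < degree p" by simp
    have "opoly A p z = opoly A q (Tm A r z)"
    proof -
      have "opoly A p z = opoly A (q * [:-r, 1:]) z" unfolding pq by (simp only: mult.commute)
      also have "\<dots> = opoly A q (Tm A r z)" by (simp only: opoly_mult opoly_lin)
      finally show ?thesis .
    qed
    show ?thesis
    proof (cases "Tm A r z \<in> W")
      case True
      then show ?thesis using less.prems(2,3) by blast
    next
      case False
      have "Tm A r z \<in> V" unfolding Tm_def
        using V less.prems(2) by (simp add: vec.subspace_diff vec.subspace_scale)
      then show ?thesis
        using less.hyps[OF dq q0 _ False] less.prems(4) \<open>opoly A p z = opoly A q (Tm A r z)\<close> by simp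
    qed
  qed
qed

lemma quotient_eigen:
  assumes V: "vec.subspace V" "\<And>z. z \<in> V \<Longrightarrow> cmat A *v z \<in> V" and W: "vec.subspace W"
    and z0: "z0 \<in> V" "z0 \<notin> W"
  shows "\<exists>z r. z \<in> V \<and> z \<notin> W \<and> Tm A r z \<in> W"
proof -
  obtain p where p: "p \<noteq> 0" "opoly A p z0 = 0" using annihilator[OF V z0(1)] by blast
  have "opoly A p z0 \<in> W" using p(2) W by (simp add: vec.subspace_0)
  from root_step[OF V W p(1) z0 this] show ?thesis by blast
qed


definition fam :: "nat^'n^'n \<Rightarrow> (complex^'n) set \<Rightarrow> nat \<Rightarrow> (nat \<Rightarrow> complex) \<Rightarrow> (nat \<Rightarrow> nat) \<Rightarrow> (nat \<Rightarrow> nat \<Rightarrow> complex^'n) \<Rightarrow> bool" where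
  "fam A S m lam k x \<longleftrightarrow> (\<forall>i<m. jordan_chain A (lam i) (k i) (x i)) \<and> vecs m k x \<subseteq> S \<and> indep m k x"

lemma sum_upd_nat:
  fixes f :: "nat \<Rightarrow> nat"
  assumes "i0 < m"
  shows "(\<Sum>i<m. (f(i0 := a)) i) + f i0 = (\<Sum>i<m. f i) + a"
proof -
  have "(\<Sum>i<m. (f(i0 := a)) i) = a + (\<Sum>i\<in>{..<m} - {i0}. f i)"
    using assms by (simp add: sum.remove[of "{..<m}" i0])
  moreover have "(\<Sum>i<m. f i) = f i0 + (\<Sum>i\<in>{..<m} - {i0}. f i)"
    using assms by (simp add: sum.remove[of "{..<m}" i0])
  ultimately show ?thesis by simp
qed

lemma jc_intro:
  assumes "k \<ge> 1" "\<And>t. t < k \<Longrightarrow> x t \<noteq> 0" "Tm A lam (x 0) = 0"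
    "\<And>t. Suc t < k \<Longrightarrow> Tm A lam (x (Suc t)) = x t"
  shows "jordan_chain A lam k x"
proof -
  have a: "\<forall>i<k. x i \<noteq> 0" using assms(2) by blast
  have b: "cmat A *v x 0 - lam *s x 0 = 0" using assms(3) by (simp add: Tm_def)
  have c: "\<forall>i. 1 \<le> i \<and> i < k \<longrightarrow> cmat A *v x i - lam *s x i = x (i - 1)"
  proof (intro allI impI)
    fix i assume i: "1 \<le> i \<and> i < k"
    then obtain t where t: "i = Suc t" by (cases i) auto
    then have "Suc t < k" using i by simp
    then show "cmat A *v x i - lam *s x i = x (i - 1)" using assms(4)[of t] t by (simp add: Tm_def)
  qed
  show ?thesis unfolding jordan_chain_def using assms(1) a b c by blast
qed

lemma vecs_chain_sub: "i < m \<Longrightarrow> x i ` {..<k i} \<subseteq> vecs m k x"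
  by (auto simp: vecs_def)

lemma W_inv:
  assumes "\<forall>i<m. jordan_chain A (lam i) (k i) (x i)" "w \<in> vec.span (vecs m k x)"
  shows "Tm A r w \<in> vec.span (vecs m k x)"
proof (rule Tm_span[OF _ assms(2)])
  fix g assume "g \<in> vecs m k x"
  then obtain i t where it: "i < m" "t < k i" "g = x i t" by (auto simp: vecs_def)
  have "Tm A r g \<in> vec.span (x i ` {..<k i})" using chain_Tm_in[of A "lam i" "k i" "x i" t r] assms(1) it by simp
  then show "Tm A r g \<in> vec.span (vecs m k x)" using vec.span_mono[OF vecs_chain_sub[OF it(1)]] by blast
qed

lemma chain_ne_preimage:
  assumes "jordan_chain A mu k x" "mu \<noteq> r"
  shows "t < k \<Longrightarrow> \<exists>w'\<in>vec.span (x ` {..<k}). Tm A r w' = x t"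
proof (induction t)
  case 0
  have "Tm A r (x 0) = (mu - r) *s x 0" using Tm_shift[of A r "x 0" mu] jc_0[OF assms(1)] by simp
  then have "Tm A r ((1 / (mu - r)) *s x 0) = ((1 / (mu - r)) * (mu - r)) *s x 0"
    by (simp only: Tm_scale vector_smult_assoc)
  then have "Tm A r ((1 / (mu - r)) *s x 0) = x 0" using assms(2) by simp
  moreover have "(1 / (mu - r)) *s x 0 \<in> vec.span (x ` {..<k})"
    using 0 by (intro vec.span_scale vec.span_base) auto
  ultimately show ?case by blast
next
  case (Suc s)
  then obtain w'' where w'': "w'' \<in> vec.span (x ` {..<k})" "Tm A r w'' = x s" by auto
  have "Tm A r (x (Suc s)) = x s + (mu - r) *s x (Suc s)"
    using Tm_shift[of A r "x (Suc s)" mu] jc_S[OF assms(1) Suc.prems] by simp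
  then have "Tm A r (x (Suc s) - w'') = (mu - r) *s x (Suc s)" using w''(2) by (simp add: Tm_diff)
  then have "Tm A r ((1 / (mu - r)) *s (x (Suc s) - w'')) = ((1 / (mu - r)) * (mu - r)) *s x (Suc s)"
    by (simp only: Tm_scale vector_smult_assoc)
  then have "Tm A r ((1 / (mu - r)) *s (x (Suc s) - w'')) = x (Suc s)"
    using assms(2) by simp
  moreover have "(1 / (mu - r)) *s (x (Suc s) - w'') \<in> vec.span (x ` {..<k})"
    using Suc.prems w''(1) by (intro vec.span_scale vec.span_diff[OF vec.span_base]) auto
  ultimately show ?case by blast
qed

lemma subspace_L1:
  assumes "\<forall>i<m. jordan_chain A (lam i) (k i) (x i)"
  shows "vec.subspace {w. \<exists>w'\<in>vec.span (vecs m k x). \<exists>d. (\<forall>i<m. lam i \<noteq> r \<longrightarrow> d i = 0) \<and>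
      w = Tm A r w' + (\<Sum>i<m. d i *s x i (k i - 1))}"
  unfolding vec.subspace_def
proof (intro conjI ballI allI)
  show "0 \<in> {w. \<exists>w'\<in>vec.span (vecs m k x). \<exists>d. (\<forall>i<m. lam i \<noteq> r \<longrightarrow> d i = 0) \<and>
      w = Tm A r w' + (\<Sum>i<m. d i *s x i (k i - 1))}"
    by (intro CollectI bexI[of _ 0] exI[of _ "\<lambda>_. 0"]) (auto intro: vec.span_zero)
next
  fix c w assume "w \<in> {w. \<exists>w'\<in>vec.span (vecs m k x). \<exists>d. (\<forall>i<m. lam i \<noteq> r \<longrightarrow> d i = 0) \<and>
      w = Tm A r w' + (\<Sum>i<m. d i *s x i (k i - 1))}"
  then obtain w' d where h: "w' \<in> vec.span (vecs m k x)" "\<forall>i<m. lam i \<noteq> r \<longrightarrow> d i = 0"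
    "w = Tm A r w' + (\<Sum>i<m. d i *s x i (k i - 1))" by blast
  show "c *s w \<in> {w. \<exists>w'\<in>vec.span (vecs m k x). \<exists>d. (\<forall>i<m. lam i \<noteq> r \<longrightarrow> d i = 0) \<and>
      w = Tm A r w' + (\<Sum>i<m. d i *s x i (k i - 1))}"
    by (intro CollectI bexI[of _ "c *s w'"] exI[of _ "\<lambda>i. c * d i"])
       (use h in \<open>auto simp: Tm_scale vec.scale_right_distrib vec.scale_sum_right vector_smult_assoc intro: vec.span_scale\<close>)
next
  fix w1 w2 assume "w1 \<in> {w. \<exists>w'\<in>vec.span (vecs m k x). \<exists>d. (\<forall>i<m. lam i \<noteq> r \<longrightarrow> d i = 0) \<and>
      w = Tm A r w' + (\<Sum>i<m. d i *s x i (k i - 1))}"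
    "w2 \<in> {w. \<exists>w'\<in>vec.span (vecs m k x). \<exists>d. (\<forall>i<m. lam i \<noteq> r \<longrightarrow> d i = 0) \<and>
      w = Tm A r w' + (\<Sum>i<m. d i *s x i (k i - 1))}"
  then obtain w1' d1 w2' d2 where h: "w1' \<in> vec.span (vecs m k x)" "\<forall>i<m. lam i \<noteq> r \<longrightarrow> d1 i = 0"
    "w1 = Tm A r w1' + (\<Sum>i<m. d1 i *s x i (k i - 1))" "w2' \<in> vec.span (vecs m k x)" "\<forall>i<m. lam i \<noteq> r \<longrightarrow> d2 i = 0"
    "w2 = Tm A r w2' + (\<Sum>i<m. d2 i *s x i (k i - 1))" by blast
  show "w1 + w2 \<in> {w. \<exists>w'\<in>vec.span (vecs m k x). \<exists>d. (\<forall>i<m. lam i \<noteq> r \<longrightarrow> d i = 0) \<and>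
      w = Tm A r w' + (\<Sum>i<m. d i *s x i (k i - 1))}"
    by (intro CollectI bexI[of _ "w1' + w2'"] exI[of _ "\<lambda>i. d1 i + d2 i"])
       (use h in \<open>auto simp: Tm_add vector_sadd_rdistrib sum.distrib intro: vec.span_add\<close>)
qed

lemma L1:
  assumes ch: "\<forall>i<m. jordan_chain A (lam i) (k i) (x i)" and w: "w \<in> vec.span (vecs m k x)"
  shows "\<exists>w'\<in>vec.span (vecs m k x). \<exists>d. (\<forall>i<m. lam i \<noteq> r \<longrightarrow> d i = 0) \<and>
      w = Tm A r w' + (\<Sum>i<m. d i *s x i (k i - 1))"
  using vec.span_induct[OF w subspace_L1[OF ch, of r]]
proof -
  have "\<And>g. g \<in> vecs m k x \<Longrightarrow> \<exists>w'\<in>vec.span (vecs m k x). \<exists>d. (\<forall>i<m. lam i \<noteq> r \<longrightarrow> d i = 0) \<and>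
      g = Tm A r w' + (\<Sum>i<m. d i *s x i (k i - 1))"
  proof -
    fix g assume "g \<in> vecs m k x"
    then obtain i t where it: "i < m" "t < k i" "g = x i t" by (auto simp: vecs_def)
    have chi: "jordan_chain A (lam i) (k i) (x i)" using ch it by auto
    show "\<exists>w'\<in>vec.span (vecs m k x). \<exists>d. (\<forall>i<m. lam i \<noteq> r \<longrightarrow> d i = 0) \<and>
      g = Tm A r w' + (\<Sum>i<m. d i *s x i (k i - 1))"
    proof (cases "lam i = r")
      case False
      obtain w' where "w' \<in> vec.span (x i ` {..<k i})" "Tm A r w' = x i t"
        using chain_ne_preimage[OF chi False it(2)] by blast
      then show ?thesis using vec.span_mono[OF vecs_chain_sub[OF it(1)]] it(3)
        by (intro bexI[of _ w'] exI[of _ "\<lambda>_. 0"]) auto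
    next
      case True
      show ?thesis
      proof (cases "Suc t < k i")
        case True
        have "x i (Suc t) \<in> vec.span (vecs m k x)"
          using it(1) True by (auto intro!: vec.span_base simp: vecs_def)
        then show ?thesis using jc_S[OF chi True] \<open>lam i = r\<close> it(3)
          by (intro bexI[of _ "x i (Suc t)"] exI[of _ "\<lambda>_. 0"]) auto
      next
        case False
        then have tk: "t = k i - 1" using it(2) by simp
        have "(\<Sum>j<m. (if j = i then 1 else 0) *s x j (k j - 1)) = x i (k i - 1)"
          using it(1) by (simp add: if_scale sum.delta)
        then show ?thesis using \<open>lam i = r\<close> it(3) tk
          by (intro bexI[of _ 0] exI[of _ "\<lambda>j. if j = i then 1 else 0"]) (auto intro: vec.span_zero)
      qed
    qed
  qed
  then show ?thesis using vec.span_induct[OF w subspace_L1[OF ch, of r]] by blast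
qed


lemma vecs_add: "vecs (Suc m) (k(m := 1)) (x(m := (\<lambda>_. z))) = insert z (vecs m k x)"
  by (auto simp: vecs_def less_Suc_eq)

lemma add_chain:
  assumes fam: "fam A S m lam k x" and z: "z \<in> S" "z \<notin> vec.span (vecs m k x)" and Tz: "Tm A r z = 0"
  shows "fam A S (Suc m) (lam(m := r)) (k(m := 1)) (x(m := (\<lambda>_. z)))
         \<and> (\<Sum>i<Suc m. (k(m := 1)) i) = Suc (\<Sum>i<m. k i)"
proof -
  have ch: "\<forall>i<m. jordan_chain A (lam i) (k i) (x i)" and sub: "vecs m k x \<subseteq> S" and ind: "indep m k x"
    using fam by (auto simp: fam_def)
  have z0: "z \<noteq> 0" using z(2) vec.span_zero by auto
  have chm: "jordan_chain A r 1 (\<lambda>_. z)" by (rule jc_intro) (use z0 Tz in auto)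
  have ch': "\<forall>i<Suc m. jordan_chain A ((lam(m := r)) i) ((k(m := 1)) i) ((x(m := (\<lambda>_. z))) i)"
    using ch chm by (auto simp: less_Suc_eq)
  have sum': "(\<Sum>i<Suc m. (k(m := 1)) i) = Suc (\<Sum>i<m. k i)"
    by (simp add: sum.cong[of "{..<m}" "{..<m}" "k(m := 1)" k])
  have dimV: "vec.dim (vec.span (insert z (vecs m k x))) = Suc (\<Sum>i<m. k i)"
    using vec.dim_insert[of z "vecs m k x"] z(2) dim_indep[OF ind] by (simp add: vec.dim_span)
  have ind': "indep (Suc m) (k(m := 1)) (x(m := (\<lambda>_. z)))"
    by (rule indep_by_count[of _ _ _ "vec.span (insert z (vecs m k x))"])
       (simp_all only: vecs_add vec.span_superset sum' dimV order_refl)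
  have "vecs (Suc m) (k(m := 1)) (x(m := (\<lambda>_. z))) \<subseteq> S"
    unfolding vecs_add using sub z(1) by blast
  then show ?thesis using ch' ind' sum' unfolding fam_def by blast
qed

lemma vecs_mem: "i < m \<Longrightarrow> t < k i \<Longrightarrow> x i t \<in> vecs m k x"
  by (auto simp: vecs_def)

lemma extend_chain:
  assumes fam: "fam A S m lam k x" and Ssub: "vec.subspace S"
    and z: "z \<in> S" "z \<notin> vec.span (vecs m k x)"
    and i0: "i0 < m" "d i0 \<noteq> 0"
    and dR: "\<And>i. i < m \<Longrightarrow> d i \<noteq> 0 \<Longrightarrow> lam i = r \<and> k i \<le> k i0"
    and Tz: "Tm A r z = (\<Sum>i<m. d i *s x i (k i - 1))"
  shows "\<exists>x'. fam A S m lam (k(i0 := Suc (k i0))) x'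
         \<and> (\<Sum>i<m. (k(i0 := Suc (k i0))) i) = Suc (\<Sum>i<m. k i)"
proof -
  have ch: "\<And>i. i < m \<Longrightarrow> jordan_chain A (lam i) (k i) (x i)" and sub: "vecs m k x \<subseteq> S" and ind: "indep m k x"
    using fam by (auto simp: fam_def)
  define K where "K = k i0"
  have kpos: "\<And>i. i < m \<Longrightarrow> k i \<ge> 1" using ch jc_k by blast
  have K1: "K \<ge> 1" using kpos[OF i0(1)] K_def by simp
  have lr: "lam i0 = r" using dR[OF i0] by simp
  define sh where "sh = (\<lambda>i j. if K \<le> j + k i then x i (j + k i - K) else 0)"
  define y where "y = (\<lambda>j. if j = K then z else (\<Sum>i<m. d i *s sh i j))"
  define x' where "x' = x(i0 := y)"
  define k' where "k' = k(i0 := Suc K)"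
  define c where "c = (\<lambda>j i t. if K \<le> j + k i \<and> t = j + k i - K then d i else (0::complex))"
  have z0: "z \<noteq> 0" using z(2) vec.span_zero by auto
  have sh_exp: "d i *s sh i j = (\<Sum>t<k i. c j i t *s x i t)" if "j < K" for i j
  proof (cases "K \<le> j + k i")
    case True
    then have "j + k i - K < k i" using that by simp
    then show ?thesis using True by (simp add: c_def sh_def if_scale sum.delta)
  next
    case False
    then show ?thesis by (simp add: c_def sh_def)
  qed
  have y_exp: "y j = (\<Sum>i<m. \<Sum>t<k i. c j i t *s x i t)" if "j < K" for j
    using that by (simp add: y_def sh_exp)
  have ynz: "y j \<noteq> 0" if "j < Suc K" for j
  proof (cases "j = K")
    case True then show ?thesis using z0 by (simp add: y_def)
  next
    case False
    then have jK: "j < K" using that by simp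
    show ?thesis
    proof
      assume "y j = 0"
      then have "(\<Sum>i<m. \<Sum>t<k i. c j i t *s x i t) = 0" using y_exp[OF jK] by simp
      then have "c j i0 j = 0" using ind i0(1) jK K_def unfolding indep_def by blast
      then show False using i0(2) K_def by (simp add: c_def)
    qed
  qed
  have sh_in: "sh i j \<in> vec.span (vecs m k x)" if "i < m" "j < K" for i j
  proof (cases "K \<le> j + k i")
    case True
    then have "j + k i - K < k i" using that(2) by simp
    then have "x i (j + k i - K) \<in> vecs m k x" by (rule vecs_mem[OF that(1)])
    then show ?thesis using True unfolding sh_def by (simp add: vec.span_base)
  next
    case False then show ?thesis unfolding sh_def by (simp add: vec.span_zero)
  qed
  have y_span: "y j \<in> vec.span (vecs m k x)" if "j < K" for j
  proof -
    have "y j = (\<Sum>i<m. d i *s sh i j)" using that by (simp add: y_def)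
    moreover have "(\<Sum>i<m. d i *s sh i j) \<in> vec.span (vecs m k x)"
      by (rule vec.span_sum, rule vec.span_scale, rule sh_in) (use that in auto)
    ultimately show ?thesis by simp
  qed
  have Tsh: "d i *s Tm A r (sh i (Suc t)) = d i *s sh i t" if "i < m" "Suc t < K" for i t
  proof (cases "d i = 0")
    case True then show ?thesis by simp
  next
    case False
    then have li: "lam i = r" and ki: "k i \<le> K" using dR[OF that(1)] K_def by auto
    show ?thesis
    proof (cases "K \<le> Suc t + k i")
      case True
      define idx where "idx = Suc t + k i - K"
      have idx: "idx < k i" using that(2) True by (simp add: idx_def)
      have "Tm A r (x i idx) = (if idx = 0 then 0 else x i (idx - 1))"
        using jc_Tm[OF ch[OF that(1)] idx] li by simp
      moreover have "sh i (Suc t) = x i idx" using True by (simp add: sh_def idx_def)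
      moreover have "sh i t = (if idx = 0 then 0 else x i (idx - 1))"
        using True by (auto simp: sh_def idx_def)
      ultimately show ?thesis by simp
    next
      case False
      then show ?thesis by (simp add: sh_def)
    qed
  qed
  have Tsh0: "d i *s Tm A r (sh i 0) = 0" if "i < m" for i
  proof (cases "d i = 0")
    case True then show ?thesis by simp
  next
    case False
    then have li: "lam i = r" and ki: "k i \<le> K" using dR[OF that(1)] K_def by auto
    show ?thesis
    proof (cases "K \<le> k i")
      case True
      then have "k i = K" using ki by simp
      then have "sh i 0 = x i 0" by (simp add: sh_def)
      then show ?thesis using jc_0[OF ch[OF that(1)]] li by simp
    next
      case False then show ?thesis by (simp add: sh_def)
    qed
  qed
  have chy: "jordan_chain A r (Suc K) y"
  proof (rule jc_intro)
    show "Suc K \<ge> 1" by simp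
    show "\<And>t. t < Suc K \<Longrightarrow> y t \<noteq> 0" by (rule ynz)
    have "Tm A r (y 0) = (\<Sum>i<m. d i *s Tm A r (sh i 0))"
      using K1 by (simp add: y_def Tm_sum Tm_scale)
    also have "\<dots> = 0" by (simp add: Tsh0)
    finally show "Tm A r (y 0) = 0" .
    fix t assume t: "Suc t < Suc K"
    show "Tm A r (y (Suc t)) = y t"
    proof (cases "Suc t = K")
      case True
      have "y t = (\<Sum>i<m. d i *s sh i t)" using True by (simp add: y_def)
      also have "\<dots> = (\<Sum>i<m. d i *s x i (k i - 1))"
      proof (rule sum.cong)
        fix i assume "i \<in> {..<m}"
        then have "k i \<ge> 1" using kpos by simp
        moreover have "t + k i - K = k i - 1" using True by simp
        ultimately show "d i *s sh i t = d i *s x i (k i - 1)" using True by (simp add: sh_def)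
      qed simp
      finally show ?thesis using True Tz by (simp add: y_def)
    next
      case False
      then have tK: "Suc t < K" using t by simp
      have "Tm A r (y (Suc t)) = (\<Sum>i<m. d i *s Tm A r (sh i (Suc t)))"
        using tK by (simp add: y_def Tm_sum Tm_scale)
      also have "\<dots> = (\<Sum>i<m. d i *s sh i t)"
        by (rule sum.cong) (simp_all add: Tsh tK)
      also have "\<dots> = y t" using tK by (simp add: y_def)
      finally show ?thesis .
    qed
  qed
  have ch': "\<And>i. i < m \<Longrightarrow> jordan_chain A (lam i) (k' i) (x' i)"
    using ch chy lr by (auto simp: k'_def x'_def K_def)
  define V where "V = vec.span (insert z (vecs m k x))"
  have vecs_V: "vecs m k' x' \<subseteq> V"
  proof
    fix v assume "v \<in> vecs m k' x'"
    then obtain i t where it: "i < m" "t < k' i" "v = x' i t" by (auto simp: vecs_def)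
    show "v \<in> V"
    proof (cases "i = i0")
      case False
      then have "v \<in> vecs m k x" using it by (auto simp: x'_def k'_def intro!: vecs_mem)
      then show ?thesis unfolding V_def by (auto intro: vec.span_base)
    next
      case True
      show ?thesis
      proof (cases "t = K")
        case True
        then show ?thesis using it \<open>i = i0\<close> by (auto simp: V_def x'_def y_def intro: vec.span_base)
      next
        case False
        then have "t < K" using it True by (simp add: k'_def)
        then have "y t \<in> vec.span (vecs m k x)" by (rule y_span)
        then show ?thesis using it \<open>i = i0\<close> unfolding V_def x'_def
          using vec.span_mono[of "vecs m k x" "insert z (vecs m k x)"] by auto
      qed
    qed
  qed
  have mem': "x' i t \<in> vecs m k' x'" if "i < m" "t < k' i" for i t
    using that by (rule vecs_mem)
  have xi0: "x i0 t \<in> vec.span (vecs m k' x')" if "t < K" for t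
  proof -
    have "y t = d i0 *s sh i0 t + (\<Sum>i\<in>{..<m} - {i0}. d i *s sh i t)"
      using that i0(1) by (simp add: y_def sum.remove[of "{..<m}" i0])
    moreover have "sh i0 t = x i0 t" by (simp add: sh_def K_def)
    ultimately have e: "x i0 t = (1 / d i0) *s (y t - (\<Sum>i\<in>{..<m} - {i0}. d i *s sh i t))"
      using i0(2) by (simp add: vector_smult_assoc)
    have "y t \<in> vecs m k' x'" using mem'[OF i0(1), of t] that by (simp add: x'_def k'_def)
    moreover have "sh i t \<in> vec.span (vecs m k' x')" if "i \<in> {..<m} - {i0}" for i
    proof (cases "K \<le> t + k i")
      case True
      have "x' i (t + k i - K) \<in> vecs m k' x'"
        using that True \<open>t < K\<close> by (intro mem') (auto simp: k'_def)
      then show ?thesis using True that by (auto simp: sh_def x'_def intro: vec.span_base)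
    next
      case False then show ?thesis by (simp add: sh_def vec.span_zero)
    qed
    ultimately show ?thesis unfolding e
      by (intro vec.span_scale vec.span_diff vec.span_sum) (auto intro: vec.span_base)
  qed
  have V_sub: "V \<subseteq> vec.span (vecs m k' x')"
    unfolding V_def
  proof (rule vec.span_minimal)
    show "insert z (vecs m k x) \<subseteq> vec.span (vecs m k' x')"
    proof
      fix v assume "v \<in> insert z (vecs m k x)"
      then consider "v = z" | i t where "i < m" "t < k i" "v = x i t" by (auto simp: vecs_def)
      then show "v \<in> vec.span (vecs m k' x')"
      proof cases
        case 1
        have "x' i0 K \<in> vecs m k' x'" using i0(1) by (intro mem') (simp_all add: k'_def)
        then show ?thesis using 1 by (auto simp: x'_def y_def intro: vec.span_base)
      next
        case (2 i t)
        show ?thesis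
        proof (cases "i = i0")
          case True then show ?thesis using 2 xi0 by (simp add: K_def)
        next
          case False
          then have "x' i t \<in> vecs m k' x'" using 2 by (intro mem') (simp_all add: k'_def)
          then show ?thesis using 2 False by (auto simp: x'_def intro: vec.span_base)
        qed
      qed
    qed
  qed simp
  have sum': "(\<Sum>i<m. k' i) = Suc (\<Sum>i<m. k i)"
    using sum_upd_nat[OF i0(1), of k "Suc K"] by (simp add: k'_def K_def)
  have dimV: "vec.dim V = Suc (\<Sum>i<m. k i)"
    using vec.dim_insert[of z "vecs m k x"] z(2) dim_indep[OF ind] by (simp add: V_def vec.dim_span)
  have ind': "indep m k' x'"
    by (rule indep_by_count[OF vecs_V V_sub]) (simp add: sum' dimV)
  have SV: "V \<subseteq> S" unfolding V_def
    by (rule vec.span_minimal[OF _ Ssub]) (use sub z(1) in blast)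
  have "fam A S m lam k' x'" unfolding fam_def using ch' ind' vecs_V SV by blast
  then show ?thesis using sum' unfolding k'_def K_def by blast
qed


lemma exists_family:
  assumes syn: "synchrony_subspace A S"
  shows "\<exists>m lam k x. fam A S m lam k x \<and> vec.span (vecs m k x) = S"
proof -
  have pd: "polydiagonal S" and inv: "\<And>z. z \<in> S \<Longrightarrow> cmat A *v z \<in> S"
    using syn by (auto simp: synchrony_subspace_def)
  have Ssub: "vec.subspace S" by (rule polyd_subspace[OF pd])
  define P where "P = (\<lambda>N. \<exists>m lam k x. fam A S m lam k x \<and> (\<Sum>i<m. k i) = N)"
  have P0: "P 0"
    unfolding P_def fam_def indep_def vecs_def by (rule exI[of _ 0]) auto
  have bound: "\<forall>N. P N \<longrightarrow> N < Suc (vec.dim S)"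
  proof (intro allI impI)
    fix N assume "P N"
    then obtain m lam k x where f: "fam A S m lam k x" "(\<Sum>i<m. k i) = N" unfolding P_def by blast
    have "vec.dim (vecs m k x) = N" using dim_indep f by (auto simp: fam_def)
    moreover have "vec.dim (vecs m k x) \<le> vec.dim S"
      by (rule vec.dim_mono) (use f(1) vec.span_superset in \<open>auto simp: fam_def\<close>)
    ultimately show "N < Suc (vec.dim S)" by simp
  qed
  obtain N0 where N0: "P N0" "\<And>N. P N \<Longrightarrow> N \<le> N0"
    using ex_has_greatest_nat[of P 0 "\<lambda>N. N" "Suc (vec.dim S)", OF P0 bound] by auto
  then obtain m lam k x where F: "fam A S m lam k x" "(\<Sum>i<m. k i) = N0" unfolding P_def by blast
  have ch: "\<forall>i<m. jordan_chain A (lam i) (k i) (x i)" and sub: "vecs m k x \<subseteq> S"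
    using F(1) by (auto simp: fam_def)
  define W where "W = vec.span (vecs m k x)"
  have WS: "W \<subseteq> S" unfolding W_def by (rule vec.span_minimal[OF sub Ssub])
  have "W = S"
  proof (rule ccontr)
    assume "W \<noteq> S"
    then obtain z0 where z0: "z0 \<in> S" "z0 \<notin> W" using WS by blast
    obtain z r where zr: "z \<in> S" "z \<notin> W" "Tm A r z \<in> W"
      using quotient_eigen[OF Ssub inv _ z0] unfolding W_def by blast
    obtain w' d where wd: "w' \<in> W" "\<forall>i<m. lam i \<noteq> r \<longrightarrow> d i = 0"
      "Tm A r z = Tm A r w' + (\<Sum>i<m. d i *s x i (k i - 1))"
      using L1[OF ch zr(3)[unfolded W_def]] unfolding W_def by blast
    define z' where "z' = z - w'"
    have Tz': "Tm A r z' = (\<Sum>i<m. d i *s x i (k i - 1))" using wd(3) by (simp add: z'_def Tm_diff)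
    have z'S: "z' \<in> S" unfolding z'_def using zr(1) wd(1) WS Ssub by (auto intro: vec.subspace_diff)
    have z'W: "z' \<notin> W"
    proof
      assume "z' \<in> W"
      then have "z' + w' \<in> W" using wd(1) unfolding W_def by (rule vec.span_add)
      then show False using zr(2) by (simp add: z'_def)
    qed
    show False
    proof (cases "\<forall>i<m. d i = 0")
      case True
      then have "Tm A r z' = 0" using Tz' by simp
      from add_chain[OF F(1) z'S z'W[unfolded W_def] this]
      have "P (Suc N0)" unfolding P_def using F(2) by blast
      then show False using N0(2) by fastforce
    next
      case False
      define R where "R = {i. i < m \<and> d i \<noteq> 0}"
      have finR: "finite (k ` R)" by (simp add: R_def)
      have neR: "k ` R \<noteq> {}" using False by (auto simp: R_def)
      obtain i0 where i0: "i0 \<in> R" "k i0 = Max (k ` R)" using Max_in[OF finR neR] by auto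
      have dR: "\<And>i. i < m \<Longrightarrow> d i \<noteq> 0 \<Longrightarrow> lam i = r \<and> k i \<le> k i0"
        using wd(2) Max_ge[OF finR] i0(2) by (auto simp: R_def)
      have "i0 < m" "d i0 \<noteq> 0" using i0(1) by (auto simp: R_def)
      from extend_chain[OF F(1) Ssub z'S z'W[unfolded W_def] this dR Tz']
      have "P (Suc N0)" unfolding P_def using F(2) by blast
      then show False using N0(2) by fastforce
    qed
  qed
  then show ?thesis using F(1) unfolding W_def by blast
qed


definition Gs :: "nat \<Rightarrow> (nat \<Rightarrow> nat) \<Rightarrow> (nat \<Rightarrow> nat \<Rightarrow> complex^'n) \<Rightarrow> nat \<Rightarrow> nat \<Rightarrow> (complex^'n) set" where
  "Gs m k x i1 s = {x i1 t | t. t < s} \<union> {x i t | i t. i < m \<and> i \<noteq> i1 \<and> t < k i}"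

lemma Gs_mono: "s \<le> s' \<Longrightarrow> Gs m k x i1 s \<subseteq> Gs m k x i1 s'"
  unfolding Gs_def by auto

lemma T_Gs:
  assumes ch: "\<forall>i<m. jordan_chain A (lam i) (k i) (x i)" and i1: "i1 < m" and s: "Suc s \<le> k i1"
    and w: "w \<in> vec.span (Gs m k x i1 (Suc s))"
  shows "Tm A (lam i1) w \<in> vec.span (Gs m k x i1 s)"
proof (rule Tm_span[OF _ w])
  fix g assume "g \<in> Gs m k x i1 (Suc s)"
  then consider t where "t < Suc s" "g = x i1 t" | i t where "i < m" "i \<noteq> i1" "t < k i" "g = x i t"
    unfolding Gs_def by blast
  then show "Tm A (lam i1) g \<in> vec.span (Gs m k x i1 s)"
  proof cases
    case (1 t)
    have "t < k i1" using 1 s by simp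
    then have "Tm A (lam i1) g = (if t = 0 then 0 else x i1 (t - 1))"
      using jc_Tm[of A "lam i1" "k i1" "x i1" t] ch i1 1 by simp
    moreover have "t \<noteq> 0 \<Longrightarrow> x i1 (t - 1) \<in> Gs m k x i1 s" using 1 unfolding Gs_def by force
    ultimately show ?thesis by (auto intro: vec.span_base vec.span_zero)
  next
    case (2 i t)
    have "Tm A (lam i1) g \<in> vec.span (x i ` {..<k i})"
      using chain_Tm_in[of A "lam i" "k i" "x i" t "lam i1"] ch 2 by simp
    moreover have "x i ` {..<k i} \<subseteq> Gs m k x i1 s" using 2 unfolding Gs_def by blast
    ultimately show ?thesis using vec.span_mono by blast
  qed
qed

lemma PROP:
  assumes ch: "\<forall>i<m. jordan_chain A (lam i) (k i) (x i)" and i1: "i1 < m"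
    and wch: "\<And>s. Suc s < k i1 \<Longrightarrow> Tm A (lam i1) (w (Suc s)) = w s"
    and top: "w (k i1 - 1) - g *s x i1 (k i1 - 1) \<in> vec.span (Gs m k x i1 (k i1 - 1))"
  shows "s < k i1 \<Longrightarrow> w s - g *s x i1 s \<in> vec.span (Gs m k x i1 s)"
proof -
  have chi: "jordan_chain A (lam i1) (k i1) (x i1)" using ch i1 by simp
  have "\<forall>n. n < k i1 \<longrightarrow> w (k i1 - 1 - n) - g *s x i1 (k i1 - 1 - n) \<in> vec.span (Gs m k x i1 (k i1 - 1 - n))"
  proof (intro allI)
    fix n show "n < k i1 \<longrightarrow> w (k i1 - 1 - n) - g *s x i1 (k i1 - 1 - n) \<in> vec.span (Gs m k x i1 (k i1 - 1 - n))"
    proof (induction n)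
      case 0 then show ?case using top by simp
    next
      case (Suc n)
      show ?case
      proof
        assume n: "Suc n < k i1"
        define s where "s = k i1 - 1 - Suc n"
        have s1: "k i1 - 1 - n = Suc s" using n s_def by simp
        have IH: "w (Suc s) - g *s x i1 (Suc s) \<in> vec.span (Gs m k x i1 (Suc s))"
          using Suc.IH n s1 by simp
        have "Suc s \<le> k i1" using n s_def by simp
        from T_Gs[OF ch i1 this IH]
        have "Tm A (lam i1) (w (Suc s)) - g *s Tm A (lam i1) (x i1 (Suc s)) \<in> vec.span (Gs m k x i1 s)"
          by (simp add: Tm_diff Tm_scale)
        moreover have "Suc s < k i1" using n s_def by simp
        ultimately show "w (k i1 - 1 - Suc n) - g *s x i1 (k i1 - 1 - Suc n) \<in> vec.span (Gs m k x i1 (k i1 - 1 - Suc n))"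
          using wch jc_S[OF chi] s_def by simp
      qed
    qed
  qed
  moreover assume "s < k i1"
  moreover have "k i1 - 1 - (k i1 - 1 - s) = s" using \<open>s < k i1\<close> by simp
  moreover have "k i1 - 1 - s < k i1" using \<open>s < k i1\<close> by simp
  ultimately show ?thesis by metis
qed

lemma indep_set:
  fixes x :: "nat \<Rightarrow> nat \<Rightarrow> complex^'n"
  assumes "indep m k x"
  shows "inj_on (\<lambda>(i,t). x i t) (Ix m k) \<and> vec.independent (vecs m k x)"
proof -
  define g where "g = (\<lambda>(i,t). x i t)"
  have vI: "vecs m k x = g ` Ix m k" by (simp add: vecs_Ix g_def)
  have d: "vec.dim (vecs m k x) = card (Ix m k)" using dim_indep[OF assms] card_Ix by simp
  have d1: "vec.dim (vecs m k x) \<le> card (g ` Ix m k)"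
    using vec.dim_le_card[of "vecs m k x" "g ` Ix m k"] vI by (simp add: vec.span_superset)
  have d2: "card (g ` Ix m k) \<le> card (Ix m k)" by (rule card_image_le) simp
  have inj: "inj_on g (Ix m k)" using d d1 d2 by (intro eq_card_imp_inj_on) auto
  have "vec.independent (g ` Ix m k)"
    using vec.card_le_dim_spanning[of "g ` Ix m k" "vecs m k x"] vI d d1 d2 by (auto simp: vec.span_superset)
  then show ?thesis using inj vI by (simp add: g_def)
qed

lemma not_in_Gs:
  assumes ind: "indep m k x" and i1: "i1 < m" and s: "s < k i1"
  shows "x i1 s \<notin> vec.span (Gs m k x i1 s)"
proof
  assume a: "x i1 s \<in> vec.span (Gs m k x i1 s)"
  have inj: "inj_on (\<lambda>(i,t). x i t) (Ix m k)" and ind': "vec.independent (vecs m k x)"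
    using indep_set[OF ind] by auto
  have "Gs m k x i1 s \<subseteq> vecs m k x - {x i1 s}"
  proof
    fix v assume "v \<in> Gs m k x i1 s"
    then consider t where "t < s" "v = x i1 t" | i t where "i < m" "i \<noteq> i1" "t < k i" "v = x i t"
      unfolding Gs_def by blast
    then show "v \<in> vecs m k x - {x i1 s}"
    proof cases
      case (1 t)
      have "(i1, t) \<in> Ix m k" "(i1, s) \<in> Ix m k" using 1 i1 s by (auto simp: Ix_def)
      then have "x i1 t \<noteq> x i1 s" using inj 1 unfolding inj_on_def by fastforce
      moreover have "x i1 t \<in> vecs m k x" by (rule vecs_mem) (use 1 i1 s in auto)
      ultimately show ?thesis using 1 by auto
    next
      case (2 i t)
      have "(i, t) \<in> Ix m k" "(i1, s) \<in> Ix m k" using 2 i1 s by (auto simp: Ix_def)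
      then have "x i t \<noteq> x i1 s" using inj 2 unfolding inj_on_def by fastforce
      then show ?thesis using 2 by (auto simp: vecs_def)
    qed
  qed
  then have "x i1 s \<in> vec.span (vecs m k x - {x i1 s})" using a vec.span_mono by blast
  moreover have "x i1 s \<in> vecs m k x" using i1 s by (rule vecs_mem)
  ultimately show False using ind' unfolding vec.dependent_def by blast
qed

lemma vecs_split:
  assumes "i1 < m" "k i1 \<ge> 1"
  shows "vecs m k x = insert (x i1 (k i1 - 1)) (Gs m k x i1 (k i1 - 1))"
proof
  show "vecs m k x \<subseteq> insert (x i1 (k i1 - 1)) (Gs m k x i1 (k i1 - 1))"
  proof
    fix v assume "v \<in> vecs m k x"
    then obtain i t where it: "i < m" "t < k i" "v = x i t" by (auto simp: vecs_def)
    show "v \<in> insert (x i1 (k i1 - 1)) (Gs m k x i1 (k i1 - 1))"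
    proof (cases "i = i1")
      case True
      then show ?thesis using it by (cases "t = k i1 - 1") (auto simp: Gs_def)
    next
      case False then show ?thesis using it by (auto simp: Gs_def)
    qed
  qed
next
  have "x i1 t \<in> vecs m k x" if "t < k i1" for t using assms(1) that by (rule vecs_mem)
  moreover have "x i t \<in> vecs m k x" if "i < m" "t < k i" for i t using that by (rule vecs_mem)
  ultimately show "insert (x i1 (k i1 - 1)) (Gs m k x i1 (k i1 - 1)) \<subseteq> vecs m k x"
    using assms unfolding Gs_def by auto
qed

lemma hankel:
  fixes X Y :: "nat \<Rightarrow> complex"
  assumes "Y 0 \<noteq> 0"
  shows "\<exists>e. \<forall>s<n. X s = (\<Sum>l\<le>s. e l * Y (s - l))"
proof (induction n)
  case 0 then show ?case by simp
next
  case (Suc n)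
  then obtain e where e: "\<forall>s<n. X s = (\<Sum>l\<le>s. e l * Y (s - l))" by blast
  define e' where "e' = e(n := (X n - (\<Sum>l<n. e l * Y (n - l))) / Y 0)"
  have "\<forall>s<Suc n. X s = (\<Sum>l\<le>s. e' l * Y (s - l))"
  proof (intro allI impI)
    fix s assume "s < Suc n"
    show "X s = (\<Sum>l\<le>s. e' l * Y (s - l))"
    proof (cases "s = n")
      case True
      have "(\<Sum>l\<le>n. e' l * Y (n - l)) = (\<Sum>l<n. e' l * Y (n - l)) + e' n * Y 0"
        by (simp add: lessThan_Suc_atMost[symmetric])
      also have "(\<Sum>l<n. e' l * Y (n - l)) = (\<Sum>l<n. e l * Y (n - l))"
        by (rule sum.cong) (auto simp: e'_def)
      finally show ?thesis using True assms by (simp add: e'_def)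
    next
      case False
      then have "s < n" using \<open>s < Suc n\<close> by simp
      have "(\<Sum>l\<le>s. e' l * Y (s - l)) = (\<Sum>l\<le>s. e l * Y (s - l))"
        by (rule sum.cong) (use \<open>s < n\<close> in \<open>auto simp: e'_def\<close>)
      then show ?thesis using e \<open>s < n\<close> by simp
    qed
  qed
  then show ?case by blast
qed


lemma exchange:
  assumes F: "fam A S m lam k x" and sp: "vec.span (vecs m k x) = S" and i1: "i1 < m"
    and zc: "jordan_chain A (lam i1) (k i1) z" and zS: "\<And>s. s < k i1 \<Longrightarrow> z s \<in> S"
    and g: "g \<noteq> 0"
    and top: "z (k i1 - 1) - g *s x i1 (k i1 - 1) \<in> vec.span (Gs m k x i1 (k i1 - 1))"
  shows "fam A S m lam k (x(i1 := z)) \<and> vec.span (vecs m k (x(i1 := z))) = S"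
proof -
  have ch: "\<forall>i<m. jordan_chain A (lam i) (k i) (x i)" and sub: "vecs m k x \<subseteq> S" and ind: "indep m k x"
    using F by (auto simp: fam_def)
  have zprop: "z s - g *s x i1 s \<in> vec.span (Gs m k x i1 s)" if "s < k i1" for s
    by (rule PROP[where w=z and g=g, OF ch i1 _ top that]) (rule jc_S[OF zc])
  define x' where "x' = x(i1 := z)"
  have xin: "s < k i1 \<Longrightarrow> x i1 s \<in> vec.span (vecs m k x')" for s
  proof (induction s rule: less_induct)
    case (less s)
    have "Gs m k x i1 s \<subseteq> vec.span (vecs m k x')"
    proof
      fix v assume "v \<in> Gs m k x i1 s"
      then consider t where "t < s" "v = x i1 t" | i t where "i < m" "i \<noteq> i1" "t < k i" "v = x i t"
        unfolding Gs_def by blast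
      then show "v \<in> vec.span (vecs m k x')"
      proof cases
        case (1 t)
        have "t < k i1" using 1 less.prems by simp
        then show ?thesis using less.IH[OF 1(1)] 1(2) by blast
      next
        case (2 i t)
        have "x' i t \<in> vecs m k x'" using 2 by (intro vecs_mem) auto
        then show ?thesis using 2 by (simp add: x'_def vec.span_base)
      qed
    qed
    then have G: "vec.span (Gs m k x i1 s) \<subseteq> vec.span (vecs m k x')"
      by (rule vec.span_minimal) simp
    have zs: "z s \<in> vec.span (vecs m k x')"
    proof -
      have "x' i1 s \<in> vecs m k x'" using less.prems i1 by (intro vecs_mem) auto
      then show ?thesis by (simp add: x'_def vec.span_base)
    qed
    have "z s - g *s x i1 s \<in> vec.span (vecs m k x')" using G zprop[OF less.prems] by blast
    then have h1: "z s - (z s - g *s x i1 s) \<in> vec.span (vecs m k x')" using zs by (rule vec.span_diff[rotated])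
    have h2: "z s - (z s - g *s x i1 s) = g *s x i1 s" by (simp add: algebra_simps)
    have "g *s x i1 s \<in> vec.span (vecs m k x')" using h1 unfolding h2 .
    then have "(1 / g) *s (g *s x i1 s) \<in> vec.span (vecs m k x')" by (rule vec.span_scale)
    moreover have "(1 / g) *s (g *s x i1 s) = x i1 s" using g by (simp add: vector_smult_assoc)
    ultimately show ?case by simp
  qed
  have vecs_sub: "vecs m k x \<subseteq> vec.span (vecs m k x')"
  proof
    fix v assume "v \<in> vecs m k x"
    then obtain i t where it: "i < m" "t < k i" "v = x i t" by (auto simp: vecs_def)
    show "v \<in> vec.span (vecs m k x')"
    proof (cases "i = i1")
      case True then show ?thesis using xin it by simp
    next
      case False
      have "x' i t \<in> vecs m k x'" using it by (intro vecs_mem) auto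
      then show ?thesis using False it by (simp add: x'_def vec.span_base)
    qed
  qed
  have S_sub: "S \<subseteq> vec.span (vecs m k x')"
    unfolding sp[symmetric] by (rule vec.span_minimal[OF vecs_sub]) simp
  have vecs'S: "vecs m k x' \<subseteq> S"
  proof
    fix v assume "v \<in> vecs m k x'"
    then obtain i t where it: "i < m" "t < k i" "v = x' i t" by (auto simp: vecs_def)
    show "v \<in> S"
    proof (cases "i = i1")
      case True then show ?thesis using zS it by (simp add: x'_def)
    next
      case False
      then have "x i t \<in> vecs m k x" using it by (intro vecs_mem) auto
      then show ?thesis using sub False it by (auto simp: x'_def)
    qed
  qed
  have span': "vec.span (vecs m k x') = S"
  proof
    show "vec.span (vecs m k x') \<subseteq> S"
      using vec.span_minimal[OF vecs'S, of] sp by (metis vec.subspace_span)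
  qed (rule S_sub)
  have dS: "vec.dim S = (\<Sum>i<m. k i)"
    using dim_indep[OF ind] sp vec.dim_span by metis
  have ind': "indep m k x'"
    by (rule indep_by_count[OF vecs'S S_sub]) (simp add: dS)
  have ch': "\<forall>i<m. jordan_chain A (lam i) (k i) (x' i)" using ch zc by (auto simp: x'_def)
  show ?thesis using ch' ind' vecs'S span' unfolding fam_def x'_def by blast
qed


definition Phi :: "nat \<Rightarrow> (nat \<Rightarrow> nat) \<Rightarrow> (nat \<Rightarrow> nat \<Rightarrow> complex^'n) \<Rightarrow> nat" where
  "Phi m k x = (\<Sum>i<m. vec.dim (polyclosure (vec.span (x i ` {..<k i}))))"

lemma Phi_less:
  assumes "i1 < m"
    "vec.dim (polyclosure (vec.span (z ` {..<k i1}))) < vec.dim (polyclosure (vec.span (x i1 ` {..<k i1})))"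
  shows "Phi m k (x(i1 := z)) < Phi m k x"
  unfolding Phi_def
  by (rule sum_strict_mono_ex1) (use assms in auto)

lemma pc_dim_less:
  assumes "polyclosure U \<subseteq> polyclosure J" "polyclosure U \<noteq> polyclosure J"
  shows "vec.dim (polyclosure U) < vec.dim (polyclosure J)"
proof -
  have e: "vec.span (polyclosure U) = polyclosure U" "vec.span (polyclosure J) = polyclosure J"
    using pc_subspace vec.span_eq_iff by blast+
  have "vec.span (polyclosure U) \<subset> vec.span (polyclosure J)" unfolding e using assms by blast
  then show ?thesis by (rule vec.dim_psubset)
qed

lemma subspace_ab: "vec.subspace {v::complex^'n. v $ a = v $ b}"
  unfolding vec.subspace_def by auto

lemma improve:
  assumes reg: "regular_network A" and syn: "synchrony_subspace A S"
    and F: "fam A S m lam k x" and sp: "vec.span (vecs m k x) = S" and i1: "i1 < m"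
    and ns: "\<not> special_jordan_subspace A (vec.span (x i1 ` {..<k i1}))"
  shows "\<exists>x'. fam A S m lam k x' \<and> vec.span (vecs m k x') = S \<and> Phi m k x' < Phi m k x"
proof -
  have ch: "\<forall>i<m. jordan_chain A (lam i) (k i) (x i)" and sub: "vecs m k x \<subseteq> S" and ind: "indep m k x"
    using F by (auto simp: fam_def)
  have pd: "polydiagonal S" using syn by (simp add: synchrony_subspace_def)
  have Ssub: "vec.subspace S" by (rule polyd_subspace[OF pd])
  define K where "K = k i1"
  define lm where "lm = lam i1"
  define J where "J = vec.span (x i1 ` {..<K})"
  have chi: "jordan_chain A lm K (x i1)" using ch i1 by (simp add: K_def lm_def)
  have K1: "K \<ge> 1" using jc_k[OF chi] .
  have jsJ: "jordan_subspace A lm J" unfolding jordan_subspace_def J_def using chi by blast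
  obtain U where U: "jordan_subspace A lm U" "vec.dim U = vec.dim J" "polyclosure U \<subseteq> polyclosure J"
    "polyclosure U \<noteq> polyclosure J" "U \<noteq> full_sync"
    using ns jsJ unfolding special_jordan_subspace_def J_def K_def by blast
  obtain K' u where u: "jordan_chain A lm K' u" "U = vec.span (u ` {..<K'})"
    using U(1) unfolding jordan_subspace_def by blast
  have "K' = K" using U(2) dim_chain[OF u(1)] dim_chain[OF chi] u(2) J_def by simp
  then have uc: "jordan_chain A lm K u" using u(1) by simp
  have Uu: "U = vec.span (u ` {..<K})" using u(2) \<open>K' = K\<close> by simp
  have u0nF: "u 0 \<notin> full_sync"
  proof
    assume uF: "u 0 \<in> full_sync"
    have u0nz: "u 0 \<noteq> 0" using jc_nz[OF uc] K1 by simp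
    show False
    proof (cases "K = 1")
      case True
      then have "u ` {..<K} = {u 0}" by auto
      then have "U = full_sync" using Uu full_sync_span[OF uF u0nz] by simp
      with U(5) show False by simp
    next
      case False
      then have "Suc 0 < K" using K1 by simp
      from semisimple[OF reg jc_S[OF uc this] uF u0nz jc_0[OF uc]] show False .
    qed
  qed
  then obtain a b where ab: "u 0 $ a \<noteq> u 0 $ b" unfolding full_sync_def by blast
  define PJ where "PJ = polyclosure J"
  have PJsub: "vec.subspace PJ" unfolding PJ_def by (rule pc_subspace)
  have JPJ: "J \<subseteq> PJ" unfolding PJ_def by (rule sub_pc)
  have UPJ: "U \<subseteq> PJ" using sub_pc[of U] U(3) unfolding PJ_def by blast
  have xS: "x i1 s \<in> S" if "s < K" for s using sub vecs_mem[OF i1, of s k x] that K_def by auto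
  have JS: "J \<subseteq> S" unfolding J_def by (rule vec.span_minimal[OF _ Ssub]) (use xS in auto)
  have PJS: "PJ \<subseteq> S" unfolding PJ_def by (rule pc_min[OF pd JS])
  have uPJ: "u s \<in> PJ" if "s < K" for s using UPJ Uu that by (auto intro: vec.span_base)
  have uS: "u s \<in> S" if "s < K" for s using uPJ[OF that] PJS by blast
  have xPJ: "x i1 s \<in> PJ" if "s < K" for s using JPJ that unfolding J_def by (auto intro: vec.span_base)
  have sep: "\<exists>w\<in>J. w $ a \<noteq> w $ b"
  proof (rule ccontr)
    assume "\<not> (\<exists>w\<in>J. w $ a \<noteq> w $ b)"
    then have "\<forall>w\<in>J. w $ a = w $ b" by blast
    moreover have "u 0 \<in> PJ" using uPJ K1 by simp
    ultimately show False using ab unfolding PJ_def pc_char by blast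
  qed
  have "u (K - 1) \<in> vec.span (insert (x i1 (K - 1)) (Gs m k x i1 (K - 1)))"
    using uS[of "K - 1"] K1 sp vecs_split[OF i1, of k x] unfolding K_def by simp
  then obtain g where g: "u (K - 1) - g *s x i1 (K - 1) \<in> vec.span (Gs m k x i1 (K - 1))"
    unfolding vec.span_insert by blast
  show ?thesis
  proof (cases "g = 0")
    case False
    have ex: "fam A S m lam k (x(i1 := u)) \<and> vec.span (vecs m k (x(i1 := u))) = S"
      by (rule exchange[OF F sp i1 _ _ False]) (use uc uS g in \<open>simp_all add: K_def lm_def\<close>)
    have "vec.dim (polyclosure (vec.span (u ` {..<k i1}))) < vec.dim (polyclosure (vec.span (x i1 ` {..<k i1})))"
      using pc_dim_less[OF U(3,4)] Uu J_def K_def by simp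
    then have "Phi m k (x(i1 := u)) < Phi m k x" by (rule Phi_less[OF i1])
    then show ?thesis using ex by blast
  next
    case True
    have uwch: "\<And>s. Suc s < k i1 \<Longrightarrow> Tm A (lam i1) (u (Suc s)) = u s"
      using jc_S[OF uc] by (simp add: K_def lm_def)
    have uG: "u s \<in> vec.span (Gs m k x i1 (K - 1))" if "s < K" for s
    proof -
      have "u s - g *s x i1 s \<in> vec.span (Gs m k x i1 s)"
        by (rule PROP[where w=u and g=g, OF ch i1 uwch]) (use g that in \<open>simp_all add: K_def\<close>)
      then have "u s \<in> vec.span (Gs m k x i1 s)" using True by simp
      moreover have "vec.span (Gs m k x i1 s) \<subseteq> vec.span (Gs m k x i1 (K - 1))"
        using that by (intro vec.span_mono Gs_mono) simp
      ultimately show ?thesis by blast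
    qed
    define X where "X = (\<lambda>s. x i1 s $ a - x i1 s $ b)"
    define Y where "Y = (\<lambda>s. u s $ a - u s $ b)"
    have Y0: "Y 0 \<noteq> 0" using ab by (simp add: Y_def)
    obtain e where e: "\<forall>s<K. X s = (\<Sum>l\<le>s. e l * Y (s - l))" using hankel[where Y=Y and X=X and n=K, OF Y0] by blast
    define x2 where "x2 = (\<lambda>s. x i1 s - (\<Sum>l\<le>s. e l *s u (s - l)))"
    have x2ab: "x2 s $ a = x2 s $ b" if "s < K" for s
    proof -
      have ca: "x2 s $ c = x i1 s $ c - (\<Sum>l\<le>s. e l * u (s - l) $ c)" for c
        by (simp add: x2_def)
      have "(\<Sum>l\<le>s. e l * Y (s - l)) = (\<Sum>l\<le>s. e l * u (s - l) $ a) - (\<Sum>l\<le>s. e l * u (s - l) $ b)"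
        by (simp add: Y_def right_diff_distrib sum_subtractf)
      then have "x2 s $ a - x2 s $ b = X s - (\<Sum>l\<le>s. e l * Y (s - l))"
        by (simp add: ca X_def)
      then show ?thesis using e that by simp
    qed
    have x2_0: "Tm A lm (x2 0) = 0"
      using jc_0[OF chi] jc_0[OF uc] by (simp add: x2_def Tm_diff Tm_scale)
    have x2_S: "Tm A lm (x2 (Suc s)) = x2 s" if "Suc s < K" for s
    proof -
      have "Tm A lm (\<Sum>l\<le>Suc s. e l *s u (Suc s - l)) = (\<Sum>l\<le>Suc s. e l *s Tm A lm (u (Suc s - l)))"
        by (simp only: Tm_sum Tm_scale)
      also have "\<dots> = (\<Sum>l\<le>s. e l *s Tm A lm (u (Suc s - l))) + e (Suc s) *s Tm A lm (u 0)"
        by simp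
      also have "\<dots> = (\<Sum>l\<le>s. e l *s u (s - l))"
      proof -
        have "(\<Sum>l\<le>s. e l *s Tm A lm (u (Suc s - l))) = (\<Sum>l\<le>s. e l *s u (s - l))"
        proof (rule sum.cong)
          fix l assume "l \<in> {..s}"
          then have "Suc s - l = Suc (s - l)" "Suc (s - l) < K" using that by auto
          then show "e l *s Tm A lm (u (Suc s - l)) = e l *s u (s - l)" using jc_S[OF uc] by simp
        qed simp
        then show ?thesis using jc_0[OF uc] by simp
      qed
      finally have "Tm A lm (\<Sum>l\<le>Suc s. e l *s u (Suc s - l)) = (\<Sum>l\<le>s. e l *s u (s - l))" .
      then show ?thesis using jc_S[OF chi that] by (simp add: x2_def Tm_diff)
    qed
    have x2top: "x2 (K - 1) - 1 *s x i1 (K - 1) \<in> vec.span (Gs m k x i1 (K - 1))"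
    proof -
      have "(\<Sum>l\<le>K - 1. e l *s u (K - 1 - l)) \<in> vec.span (Gs m k x i1 (K - 1))"
        by (intro vec.span_sum vec.span_scale uG) (use K1 in auto)
      then show ?thesis by (simp add: x2_def vec.span_neg)
    qed
    have x2G: "x2 s - 1 *s x i1 s \<in> vec.span (Gs m k x i1 s)" if "s < K" for s
      by (rule PROP[where w=x2 and g=1, OF ch i1])
         (use x2_S x2top that in \<open>simp_all add: K_def lm_def\<close>)
    have x2nz: "x2 s \<noteq> 0" if "s < K" for s
    proof
      assume "x2 s = 0"
      then have "- x i1 s \<in> vec.span (Gs m k x i1 s)" using x2G[OF that] by simp
      then have "x i1 s \<in> vec.span (Gs m k x i1 s)" using vec.span_neg by fastforce
      with not_in_Gs[OF ind i1] that show False by (simp add: K_def)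
    qed
    have x2c: "jordan_chain A lm K x2"
      by (rule jc_intro[OF K1 x2nz x2_0 x2_S])
    have x2PJ: "x2 s \<in> PJ" if "s < K" for s
      unfolding x2_def
      by (intro vec.subspace_diff[OF PJsub] vec.subspace_sum[OF PJsub] vec.subspace_scale[OF PJsub] xPJ uPJ)
         (use that in auto)
    have x2S: "x2 s \<in> S" if "s < K" for s using x2PJ[OF that] PJS by blast
    have ex: "fam A S m lam k (x(i1 := x2)) \<and> vec.span (vecs m k (x(i1 := x2))) = S"
      by (rule exchange[where g=1, OF F sp i1]) (use x2c x2S x2top in \<open>simp_all add: K_def lm_def\<close>)
    define X2 where "X2 = vec.span (x2 ` {..<K})"
    have X2PJ: "X2 \<subseteq> PJ" unfolding X2_def by (rule vec.span_minimal[OF _ PJsub]) (use x2PJ in auto)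
    have PX2: "polyclosure X2 \<subseteq> PJ" unfolding PJ_def
      by (rule pc_min[OF pc_polyd X2PJ[unfolded PJ_def]])
    have X2ab: "\<forall>v\<in>X2. v $ a = v $ b"
    proof -
      have "X2 \<subseteq> {v. v $ a = v $ b}" unfolding X2_def
        by (rule vec.span_minimal[OF _ subspace_ab]) (use x2ab in auto)
      then show ?thesis by blast
    qed
    have "polyclosure X2 \<noteq> PJ"
    proof
      assume eq: "polyclosure X2 = PJ"
      obtain w where w: "w \<in> J" "w $ a \<noteq> w $ b" using sep by blast
      have "w \<in> polyclosure X2" using eq JPJ w(1) by blast
      then have "w $ a = w $ b" using X2ab unfolding pc_char by blast
      with w(2) show False by simp
    qed
    then have "vec.dim (polyclosure X2) < vec.dim (polyclosure J)"
      using pc_dim_less[of X2 J] PX2 unfolding PJ_def by blast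
    then have "Phi m k (x(i1 := x2)) < Phi m k x"
      by (intro Phi_less[OF i1]) (simp add: X2_def J_def K_def)
    then show ?thesis using ex by blast
  qed
qed


lemma main_special:
  assumes reg: "regular_network A" and syn: "synchrony_subspace A S"
  shows "\<exists>m lam k x. fam A S m lam k x \<and> vec.span (vecs m k x) = S \<and>
           (\<forall>i<m. special_jordan_subspace A (vec.span (x i ` {..<k i})))"
proof -
  obtain m0 lam0 k0 x0 where F0: "fam A S m0 lam0 k0 x0" "vec.span (vecs m0 k0 x0) = S"
    using exists_family[OF syn] by blast
  define Q where "Q = (\<lambda>(m, lam, k, x). fam A S m lam k x \<and> vec.span (vecs m k x) = S)"
  define \<mu> where "\<mu> = (\<lambda>(m::nat, lam::nat \<Rightarrow> complex, k::nat \<Rightarrow> nat, x::nat \<Rightarrow> nat \<Rightarrow> complex^'a). Phi m k x)"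
  have "Q (m0, lam0, k0, x0)" using F0 by (simp add: Q_def)
  from ex_has_least_nat[of Q _ \<mu>, OF this]
  obtain t where t: "Q t" "\<And>t'. Q t' \<Longrightarrow> \<mu> t \<le> \<mu> t'" by blast
  obtain m lam k x where tt: "t = (m, lam, k, x)" by (cases t) auto
  have F: "fam A S m lam k x" "vec.span (vecs m k x) = S" using t(1) tt by (auto simp: Q_def)
  have "\<forall>i<m. special_jordan_subspace A (vec.span (x i ` {..<k i}))"
  proof (intro allI impI)
    fix i1 assume i1: "i1 < m"
    show "special_jordan_subspace A (vec.span (x i1 ` {..<k i1}))"
    proof (rule ccontr)
      assume "\<not> special_jordan_subspace A (vec.span (x i1 ` {..<k i1}))"
      from improve[OF reg syn F i1 this] obtain x' where
        x': "fam A S m lam k x'" "vec.span (vecs m k x') = S" "Phi m k x' < Phi m k x" by blast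
      have "Q (m, lam, k, x')" using x' by (simp add: Q_def)
      from t(2)[OF this] have "Phi m k x \<le> Phi m k x'" using tt by (simp add: \<mu>_def)
      with x'(3) show False by simp
    qed
  qed
  then show ?thesis using F by blast
qed

lemma chain_span_rep:
  fixes x :: "nat \<Rightarrow> complex^'n"
  shows "vec.span (x ` {..<k}) = {(\<Sum>t<k. c t *s x t) | c. True}"
proof -
  have "vec.span (x ` {..<k}) = vec.span (vecs (Suc 0) (\<lambda>_. k) (\<lambda>_. x))" by (simp add: vecs_single)
  also have "\<dots> = {(\<Sum>i<Suc 0. \<Sum>t<k. c i t *s x t) | c. True}" by (rule span_vecs_rep)
  also have "\<dots> = {(\<Sum>t<k. c t *s x t) | c. True}"
  proof (rule set_eqI, rule iffI)
    fix v assume "v \<in> {(\<Sum>i<Suc 0. \<Sum>t<k. c i t *s x t) | c. True}"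
    then obtain c where "v = (\<Sum>i<Suc 0. \<Sum>t<k. c i t *s x t)" by blast
    then show "v \<in> {(\<Sum>t<k. c t *s x t) | c. True}" by (intro CollectI exI[of _ "c 0"]) simp
  next
    fix v assume "v \<in> {(\<Sum>t<k. c t *s x t) | c. True}"
    then obtain c where "v = (\<Sum>t<k. c t *s x t)" by blast
    then show "v \<in> {(\<Sum>i<Suc 0. \<Sum>t<k. c i t *s x t) | c. True}" by (intro CollectI exI[of _ "\<lambda>_. c"]) simp
  qed
  finally show ?thesis .
qed

lemma direct_sum_of_family:
  assumes F: "fam A S m lam k x" and sp: "vec.span (vecs m k x) = S"
  shows "is_direct_sum S m (\<lambda>i. vec.span (x i ` {..<k i}))"
  unfolding is_direct_sum_def
proof (intro conjI allI impI)
  have ind: "indep m k x" using F by (simp add: fam_def)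
  have Ssub: "vec.subspace S" using sp by (metis vec.subspace_span)
  have JS: "vec.span (x i ` {..<k i}) \<subseteq> S" if "i < m" for i
    using vec.span_mono[OF vecs_chain_sub[OF that]] sp by blast
  show "S = {\<Sum>i<m. y i |y. \<forall>i<m. y i \<in> vec.span (x i ` {..<k i})}"
  proof
    show "S \<subseteq> {\<Sum>i<m. y i |y. \<forall>i<m. y i \<in> vec.span (x i ` {..<k i})}"
    proof
      fix v assume "v \<in> S"
      then obtain c where c: "v = (\<Sum>i<m. \<Sum>t<k i. c i t *s x i t)" using sp span_vecs_rep by blast
      have "\<forall>i<m. (\<Sum>t<k i. c i t *s x i t) \<in> vec.span (x i ` {..<k i})"
        by (intro allI impI vec.span_sum vec.span_scale vec.span_base) auto
      then show "v \<in> {\<Sum>i<m. y i |y. \<forall>i<m. y i \<in> vec.span (x i ` {..<k i})}"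
        using c by blast
    qed
  next
    show "{\<Sum>i<m. y i |y. \<forall>i<m. y i \<in> vec.span (x i ` {..<k i})} \<subseteq> S"
    proof
      fix v assume "v \<in> {\<Sum>i<m. y i |y. \<forall>i<m. y i \<in> vec.span (x i ` {..<k i})}"
      then obtain y where y: "v = (\<Sum>i<m. y i)" "\<forall>i<m. y i \<in> vec.span (x i ` {..<k i})" by blast
      show "v \<in> S" unfolding y(1) by (rule vec.subspace_sum[OF Ssub]) (use y(2) JS in auto)
    qed
  qed
next
  fix y assume y: "(\<forall>i<m. y i \<in> vec.span (x i ` {..<k i})) \<and> (\<Sum>i<m. y i) = 0"
  have ind: "indep m k x" using F by (simp add: fam_def)
  have "\<forall>i. \<exists>c. i < m \<longrightarrow> y i = (\<Sum>t<k i. c t *s x i t)"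
    using y chain_span_rep by blast
  then obtain C where C: "\<And>i. i < m \<Longrightarrow> y i = (\<Sum>t<k i. C i t *s x i t)" by metis
  have "(\<Sum>i<m. \<Sum>t<k i. C i t *s x i t) = 0" using y C by simp
  then have C0: "\<forall>i<m. \<forall>t<k i. C i t = 0" using ind unfolding indep_def by blast
  fix i assume "i < m"
  then show "y i = 0" using C C0 by simp
qed

lemma backward:
  assumes pd: "polydiagonal S" and sj: "\<forall>i<m. special_jordan_subspace A (J i)" and ds: "is_direct_sum S m J"
  shows "synchrony_subspace A S"
  unfolding synchrony_subspace_def
proof (intro conjI ballI)
  show "polydiagonal S" by (rule pd)
  have inv: "cmat A *v z \<in> J i" if im: "i < m" and zJ: "z \<in> J i" for i z
  proof -
    obtain lam where "jordan_subspace A lam (J i)" using sj im unfolding special_jordan_subspace_def by blast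
    then obtain k x where kx: "jordan_chain A lam k x" "J i = vec.span (x ` {..<k})"
      unfolding jordan_subspace_def by blast
    show ?thesis using chain_span_inv[OF kx(1), of z 0] zJ kx(2) by (simp add: M_eq_Tm)
  qed
  fix z assume "z \<in> S"
  then obtain y where y: "z = (\<Sum>i<m. y i)" "\<forall>i<m. y i \<in> J i"
    using ds unfolding is_direct_sum_def by blast
  have "cmat A *v z = (\<Sum>i<m. cmat A *v y i)" using y(1) by (simp add: mv_sum)
  moreover have "\<forall>i<m. cmat A *v y i \<in> J i" using y(2) inv by blast
  ultimately show "cmat A *v z \<in> S" using ds unfolding is_direct_sum_def by blast
qed

theorem mainTheorem7:
  fixes A :: "nat^'n^'n" and S :: "(complex^'n) set"
  assumes "regular_network A"
  shows "synchrony_subspace A S \<longleftrightarrow>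
           polydiagonal S \<and>
           (\<exists>m J. (\<forall>k<m. special_jordan_subspace A (J k)) \<and> is_direct_sum S m J)"
proof
  assume syn: "synchrony_subspace A S"
  then have pd: "polydiagonal S" by (simp add: synchrony_subspace_def)
  obtain m lam k x where F: "fam A S m lam k x" "vec.span (vecs m k x) = S"
    and sp: "\<forall>i<m. special_jordan_subspace A (vec.span (x i ` {..<k i}))"
    using main_special[OF assms syn] by blast
  have "is_direct_sum S m (\<lambda>i. vec.span (x i ` {..<k i}))" by (rule direct_sum_of_family[OF F])
  then show "polydiagonal S \<and> (\<exists>m J. (\<forall>k<m. special_jordan_subspace A (J k)) \<and> is_direct_sum S m J)"
    using pd sp by (intro conjI exI[of _ m] exI[of _ "\<lambda>i. vec.span (x i ` {..<k i})"]) auto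
next
  assume "polydiagonal S \<and> (\<exists>m J. (\<forall>k<m. special_jordan_subspace A (J k)) \<and> is_direct_sum S m J)"
  then obtain m J where "polydiagonal S" "\<forall>k<m. special_jordan_subspace A (J k)" "is_direct_sum S m J"
    by blast
  then show "synchrony_subspace A S" by (rule backward)
qed

end
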